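(* Let $k$ be a field, $Q,q\in k^\times$, $d\ge1$, and let $n=2r+1$ with $r\geq d$. Then the category $\mathcal P^d_{Q,q}$ is equivalent to the category of finite-dimensional modules over the algebra $S^B_{Q,q}(n;d)=\mathrm{End}_{\mathcal H^B_{Q,q}(d)}(V_n^{\otimes d})$.
   Context: $\mathcal H^B_{Q,q}(d)$ is the algebra generated by $T_0,\dots,T_{d-1}$ with relations $(T_0+Q)(T_0-Q^{-1})=0$; $(T_i+q)(T_i-q^{-1})=0$ ($i>0$); $T_iT_{i+1}T_i=T_{i+1}T_iT_{i+1}$ ($i>0$); $T_0T_1T_0T_1=T_1T_0T_1T_0$; $T_iT_j=T_jT_i$ ($|i-j|>1$). For $m=2s$ let $\mathbb I_m=\{-\tfrac{2s-1}{2},\dots,-\tfrac12,\tfrac12,\dots,\tfrac{2s-1}{2}\}$ and for $m=2s+1$ let $\mathbb I_m=\{-s,\dots,s\}$; $V_m$ has basis $\{v_i:i\in\mathbb I_m\}$. $R_q(v_i\otimes v_j)=q^{-1}v_i\otimes v_j$ if $i=j$, $v_j\otimes v_i$ if $i<j$, $v_j\otimes v_i+(q^{-1}-q)v_i\otimes v_j$ if $i>j$; $K_Q(v_i)=Q^{-1}v_i$ if $i=0$, $v_{-i}$ if $i>0$, $v_{-i}+(Q^{-1}-Q)v_i$ if $i<0$. The algebra acts on $V_m^{\otimes d}$ from the right: $T_i$ ($i>0$) by $R_q$ on factors $i,i+1$, $T_0$ by $K_Q$ on the first factor. $\mathcal C^B_d$ is the $k$-linear category with objects $V_m$ ($m\ge1$)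 and $\mathrm{Hom}_{\mathcal C^B_d}(V_m,V_{m'})=\mathrm{Hom}_{\mathcal H^B_{Q,q}(d)}(V_m^{\otimes d},V_{m'}^{\otimes d})$, composition being composition of maps. $\mathcal P^d_{Q,q}$ is the category of $k$-linear functors from $\mathcal C^B_d$ to the category of finite-dimensional $k$-vector spaces, with natural transformations as morphisms. *)

theory Defs
  imports Main
begin

record ('o, 'a) category =
  obj  :: "'o set"
  hom  :: "'o \<Rightarrow> 'o \<Rightarrow> 'a set"
  comp :: "'o \<Rightarrow> 'o \<Rightarrow> 'o \<Rightarrow> 'a \<Rightarrow> 'a \<Rightarrow> 'a"  (* comp a b c g f = g o f for f : a -> b, g : b -> c *)
  idn  :: "'o \<Rightarrow> 'a"

definition is_functor ::
  "('o, 'a) category \<Rightarrow> ('p, 'b) category \<Rightarrow> ('o \<Rightarrow> 'p) \<Rightarrow> ('o \<Rightarrow> 'o \<Rightarrow> 'a \<Rightarrow> 'b) \<Rightarrow> bool" where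
  "is_functor C D Fo Fa \<longleftrightarrow>
     (\<forall>a\<in>obj C. Fo a \<in> obj D) \<and>
     (\<forall>a\<in>obj C. \<forall>b\<in>obj C. \<forall>f\<in>hom C a b. Fa a b f \<in> hom D (Fo a) (Fo b)) \<and>
     (\<forall>a\<in>obj C. \<forall>b\<in>obj C. \<forall>c\<in>obj C. \<forall>f\<in>hom C a b. \<forall>g\<in>hom C b c.
        Fa a c (comp C a b c g f) = comp D (Fo a) (Fo b) (Fo c) (Fa b c g) (Fa a b f)) \<and>
     (\<forall>a\<in>obj C. Fa a a (idn C a) = idn D (Fo a))"

definition is_iso :: "('p, 'b) category \<Rightarrow> 'p \<Rightarrow> 'p \<Rightarrow> 'b \<Rightarrow> bool" where
  "is_iso D x y u \<longleftrightarrow> u \<in> hom D x y \<and>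
     (\<exists>v\<in>hom D y x. comp D x y x v u = idn D x \<and> comp D y x y u v = idn D y)"

definition is_nat_iso ::
  "('o, 'a) category \<Rightarrow> ('p, 'b) category \<Rightarrow> ('o \<Rightarrow> 'p) \<Rightarrow> ('o \<Rightarrow> 'o \<Rightarrow> 'a \<Rightarrow> 'b)
     \<Rightarrow> ('o \<Rightarrow> 'p) \<Rightarrow> ('o \<Rightarrow> 'o \<Rightarrow> 'a \<Rightarrow> 'b) \<Rightarrow> ('o \<Rightarrow> 'b) \<Rightarrow> bool" where
  "is_nat_iso C D Fo Fa Go Ga eta \<longleftrightarrow>
     (\<forall>a\<in>obj C. is_iso D (Fo a) (Go a) (eta a)) \<and>
     (\<forall>a\<in>obj C. \<forall>b\<in>obj C. \<forall>f\<in>hom C a b.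
        comp D (Fo a) (Fo b) (Go b) (eta b) (Fa a b f) = comp D (Fo a) (Go a) (Go b) (Ga a b f) (eta a))"

definition cat_equivalent :: "('o, 'a) category \<Rightarrow> ('p, 'b) category \<Rightarrow> bool" where
  "cat_equivalent C D \<longleftrightarrow>
     (\<exists>Fo Fa Go Ga eta eps.
        is_functor C D Fo Fa \<and> is_functor D C Go Ga \<and>
        is_nat_iso C C (\<lambda>a. Go (Fo a)) (\<lambda>a b f. Ga (Fo a) (Fo b) (Fa a b f))
                       (\<lambda>a. a) (\<lambda>a b f. f) eta \<and>
        is_nat_iso D D (\<lambda>x. Fo (Go x)) (\<lambda>x y g. Fa (Go x) (Go y) (Ga x y g))
                       (\<lambda>x. x) (\<lambda>x y g. g) eps)"

(* matrices indexed by naturals (finite-dimensional vector spaces k^n) *)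
type_synonym 'k nmat = "nat \<Rightarrow> nat \<Rightarrow> 'k"

definition nmul :: "'k::field nmat \<Rightarrow> nat \<Rightarrow> 'k nmat \<Rightarrow> 'k nmat" where
  "nmul A n B = (\<lambda>i j. \<Sum>l<n. A i l * B l j)"

definition nid :: "nat \<Rightarrow> 'k::field nmat" where
  "nid n = (\<lambda>i j. if i = j \<and> i < n then 1 else 0)"

definition nmat_in :: "nat \<Rightarrow> nat \<Rightarrow> 'k::field nmat \<Rightarrow> bool" where
  "nmat_in r c A \<longleftrightarrow> (\<forall>i j. A i j \<noteq> 0 \<longrightarrow> i < r \<and> j < c)"

(* matrices indexed by tuples of (doubled) indices: linear maps between tensor powers *)
type_synonym 'k tmat = "int list \<Rightarrow> int list \<Rightarrow> 'k"

text \<open>The index set I_m, with every index doubled so that it becomes an integer: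
  i in I_m is represented by 2i.  For m = 2s this gives the odd integers in [-(2s-1), 2s-1],
  for m = 2s+1 the even integers in [-2s, 2s].  Order, sign and the value 0 are preserved.\<close>

definition idx :: "nat \<Rightarrow> int set" where
  "idx m = {j. \<bar>j\<bar> \<le> int m - 1 \<and> even (j + int m - 1)}"

(* basis of V_m^{\<otimes>d}: tuples (lists) of length d *)
definition tup :: "nat \<Rightarrow> nat \<Rightarrow> int list set" where
  "tup d m = {xs. length xs = d \<and> set xs \<subseteq> idx m}"

definition tmul :: "nat \<Rightarrow> nat \<Rightarrow> 'k::field tmat \<Rightarrow> 'k tmat \<Rightarrow> 'k tmat" where
  "tmul d m A B = (\<lambda>x z. \<Sum>y\<in>tup d m. A x y * B y z)"

definition tid :: "nat \<Rightarrow> nat \<Rightarrow> 'k::field tmat" where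
  "tid d m = (\<lambda>x y. if x = y \<and> x \<in> tup d m then 1 else 0)"

(* R_q : matrix entry = coefficient of v_a (x) v_b in R_q(v_i (x) v_j) *)
definition Rq :: "'k::field \<Rightarrow> int \<Rightarrow> int \<Rightarrow> int \<Rightarrow> int \<Rightarrow> 'k" where
  "Rq q a b i j =
     (if i = j then (if a = i \<and> b = j then inverse q else 0)
      else if i < j then (if a = j \<and> b = i then 1 else 0)
      else (if a = j \<and> b = i then 1 else 0) + (if a = i \<and> b = j then inverse q - q else 0))"

(* K_Q : matrix entry = coefficient of v_a in K_Q(v_i) *)
definition KQ :: "'k::field \<Rightarrow> int \<Rightarrow> int \<Rightarrow> 'k" where
  "KQ Q a i =
     (if i = 0 then (if a = 0 then inverse Q else 0)
      else if i > 0 then (if a = - i then 1 else 0)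
      else (if a = - i then 1 else 0) + (if a = i then inverse Q - Q else 0))"

text \<open>Action of the generator T_i on V_m^{\<otimes>d}: entry (y, x) is the coefficient of the basis
  tensor y in the image of the basis tensor x.  T_0 acts by K_Q on the first factor,
  T_i (i > 0) by R_q on the factors i, i+1 (list positions i-1, i).\<close>

definition Tgen :: "nat \<Rightarrow> 'k::field \<Rightarrow> 'k \<Rightarrow> nat \<Rightarrow> nat \<Rightarrow> 'k tmat" where
  "Tgen d Q q m i = (\<lambda>y x.
     if y \<in> tup d m \<and> x \<in> tup d m then
       (if i = 0 then (if tl y = tl x then KQ Q (hd y) (hd x) else 0)
        else (if (\<forall>p<d. p \<noteq> i - 1 \<and> p \<noteq> i \<longrightarrow> y ! p = x ! p)
              then Rq q (y ! (i - 1)) (y ! i) (x ! (i - 1)) (x ! i) else 0))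
     else 0)"

text \<open>Hom_{H^B_{Q,q}(d)}(V_m^{\<otimes>d}, V_{m'}^{\<otimes>d}): linear maps (matrices supported on
  tup d m' x tup d m) commuting with the action of all generators T_0, ..., T_{d-1}.\<close>

definition CHom :: "nat \<Rightarrow> 'k::field \<Rightarrow> 'k \<Rightarrow> nat \<Rightarrow> nat \<Rightarrow> 'k tmat set" where
  "CHom d Q q m m' = {f.
     (\<forall>x y. f x y \<noteq> 0 \<longrightarrow> x \<in> tup d m' \<and> y \<in> tup d m) \<and>
     (\<forall>i<d. tmul d m f (Tgen d Q q m i) = tmul d m' (Tgen d Q q m' i) f)}"

text \<open>A k-linear functor F : C^B_d -> (finite-dimensional k-vector spaces), with F(V_m) = k^(D m)
  and F on morphisms given by matrices Fm m m' f.\<close>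

type_synonym 'k Pobj = "(nat \<Rightarrow> nat) \<times> (nat \<Rightarrow> nat \<Rightarrow> 'k tmat \<Rightarrow> 'k nmat)"

definition is_linfunctor :: "nat \<Rightarrow> 'k::field \<Rightarrow> 'k \<Rightarrow> 'k Pobj \<Rightarrow> bool" where
  "is_linfunctor d Q q X \<longleftrightarrow> (case X of (D, Fm) \<Rightarrow>
     (\<forall>m m'. 1 \<le> m \<longrightarrow> 1 \<le> m' \<longrightarrow> (\<forall>f\<in>CHom d Q q m m'. nmat_in (D m') (D m) (Fm m m' f))) \<and>
     (\<forall>m m'. 1 \<le> m \<longrightarrow> 1 \<le> m' \<longrightarrow> (\<forall>f\<in>CHom d Q q m m'. \<forall>g\<in>CHom d Q q m m'. \<forall>c.
        Fm m m' (\<lambda>x y. f x y + g x y) = (\<lambda>i j. Fm m m' f i j + Fm m m' g i j) \<and>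
        Fm m m' (\<lambda>x y. c * f x y) = (\<lambda>i j. c * Fm m m' f i j))) \<and>
     (\<forall>m m' m''. 1 \<le> m \<longrightarrow> 1 \<le> m' \<longrightarrow> 1 \<le> m'' \<longrightarrow>
        (\<forall>f\<in>CHom d Q q m m'. \<forall>g\<in>CHom d Q q m' m''.
           Fm m m'' (tmul d m' g f) = nmul (Fm m' m'' g) (D m') (Fm m m' f))) \<and>
     (\<forall>m. 1 \<le> m \<longrightarrow> Fm m m (tid d m) = nid (D m)))"

(* natural transformations F => G; components extensional (zero at the non-object 0) *)
definition is_nattrans :: "nat \<Rightarrow> 'k::field \<Rightarrow> 'k \<Rightarrow> 'k Pobj \<Rightarrow> 'k Pobj \<Rightarrow> (nat \<Rightarrow> 'k nmat) \<Rightarrow> bool" where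
  "is_nattrans d Q q X Y eta \<longleftrightarrow> (case X of (D, Fm) \<Rightarrow> case Y of (D', Gm) \<Rightarrow>
     (\<forall>m. 1 \<le> m \<longrightarrow> nmat_in (D' m) (D m) (eta m)) \<and> eta 0 = (\<lambda>i j. 0) \<and>
     (\<forall>m m'. 1 \<le> m \<longrightarrow> 1 \<le> m' \<longrightarrow> (\<forall>f\<in>CHom d Q q m m'.
        nmul (eta m') (D m') (Fm m m' f) = nmul (Gm m m' f) (D' m) (eta m))))"

definition Pcat :: "nat \<Rightarrow> 'k::field \<Rightarrow> 'k \<Rightarrow> ('k Pobj, nat \<Rightarrow> 'k nmat) category" where
  "Pcat d Q q = \<lparr>
     obj = {X. is_linfunctor d Q q X},
     hom = (\<lambda>X Y. {eta. is_nattrans d Q q X Y eta}),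
     comp = (\<lambda>X Y Z th eta. \<lambda>m. nmul (th m) (fst Y m) (eta m)),
     idn = (\<lambda>X. \<lambda>m. if 1 \<le> m then nid (fst X m) else (\<lambda>i j. 0)) \<rparr>"

text \<open>A finite-dimensional left S-module: k^N together with a k-algebra homomorphism
  rho : S -> M_N(k); multiplication in S is composition.\<close>

type_synonym 'k Mobj = "nat \<times> ('k tmat \<Rightarrow> 'k nmat)"

definition is_Smodule :: "nat \<Rightarrow> 'k::field \<Rightarrow> 'k \<Rightarrow> nat \<Rightarrow> 'k Mobj \<Rightarrow> bool" where
  "is_Smodule d Q q n M \<longleftrightarrow> (case M of (N, rho) \<Rightarrow>
     (\<forall>a\<in>CHom d Q q n n. nmat_in N N (rho a)) \<and>
     (\<forall>a\<in>CHom d Q q n n. \<forall>b\<in>CHom d Q q n n. \<forall>c.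
        rho (\<lambda>x y. a x y + b x y) = (\<lambda>i j. rho a i j + rho b i j) \<and>
        rho (\<lambda>x y. c * a x y) = (\<lambda>i j. c * rho a i j) \<and>
        rho (tmul d n a b) = nmul (rho a) N (rho b)) \<and>
     rho (tid d n) = nid N)"

definition is_Smodhom :: "nat \<Rightarrow> 'k::field \<Rightarrow> 'k \<Rightarrow> nat \<Rightarrow> 'k Mobj \<Rightarrow> 'k Mobj \<Rightarrow> 'k nmat \<Rightarrow> bool" where
  "is_Smodhom d Q q n M M' phi \<longleftrightarrow> (case M of (N, rho) \<Rightarrow> case M' of (N', rho') \<Rightarrow>
     nmat_in N' N phi \<and>
     (\<forall>a\<in>CHom d Q q n n. nmul phi N (rho a) = nmul (rho' a) N' phi))"

definition Smod_cat :: "nat \<Rightarrow> 'k::field \<Rightarrow> 'k \<Rightarrow> nat \<Rightarrow> ('k Mobj, 'k nmat) category" where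
  "Smod_cat d Q q n = \<lparr>
     obj = {M. is_Smodule d Q q n M},
     hom = (\<lambda>M M'. {phi. is_Smodhom d Q q n M M' phi}),
     comp = (\<lambda>M M' M'' psi phi. nmul psi (fst M') phi),
     idn = (\<lambda>M. nid (fst M)) \<rparr>"

end

theory Submission
  imports Defs
begin

definition mm :: "'a set \<Rightarrow> ('x \<Rightarrow> 'a \<Rightarrow> 'k::field) \<Rightarrow> ('a \<Rightarrow> 'y \<Rightarrow> 'k) \<Rightarrow> 'x \<Rightarrow> 'y \<Rightarrow> 'k" where
  "mm I A B = (\<lambda>x z. \<Sum>y\<in>I. A x y * B y z)"

definition supp_in :: "'x set \<Rightarrow> 'y set \<Rightarrow> ('x \<Rightarrow> 'y \<Rightarrow> 'k::zero) \<Rightarrow> bool" where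
  "supp_in X Y A \<longleftrightarrow> (\<forall>x y. A x y \<noteq> 0 \<longrightarrow> x \<in> X \<and> y \<in> Y)"

definition idm :: "'a set \<Rightarrow> 'a \<Rightarrow> 'a \<Rightarrow> 'k::field" where
  "idm I = (\<lambda>x y. if x = y \<and> x \<in> I then 1 else 0)"

lemma nmul_mm: "nmul A n B = mm {..<n} A B"
  by (simp add: nmul_def mm_def)

lemma tmul_mm: "tmul d m A B = mm (tup d m) A B"
  by (simp add: tmul_def mm_def)

lemma nid_idm: "nid n = idm {..<n}"
  by (auto simp: nid_def idm_def fun_eq_iff)

lemma tid_idm: "tid d m = idm (tup d m)"
  by (auto simp: tid_def idm_def fun_eq_iff)

lemma nmat_in_supp: "nmat_in r c A \<longleftrightarrow> supp_in {..<r} {..<c} A"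
  by (simp add: nmat_in_def supp_in_def)

lemma mm_assoc:
  assumes "finite I" "finite J"
  shows "mm J (mm I A B) C = mm I A (mm J B C)"
  unfolding mm_def
  by (auto simp: fun_eq_iff sum_distrib_left sum_distrib_right mult.assoc intro: sum.swap)

lemma mm_idm_left: "finite I \<Longrightarrow> supp_in I Y B \<Longrightarrow> mm I (idm I) B = B"
  unfolding mm_def idm_def supp_in_def
proof (intro ext)
  fix x z assume fin: "finite I" and h: "\<forall>x y. B x y \<noteq> 0 \<longrightarrow> x \<in> I \<and> y \<in> Y"
  have "(\<Sum>y\<in>I. (if x = y \<and> x \<in> I then 1 else 0) * B y z) = (\<Sum>y\<in>I. if y = x then B x z else 0)"
    by (rule sum.cong) auto
  also have "\<dots> = B x z" using h fin by (cases "x \<in> I") (auto simp: sum.delta)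
  finally show "(\<Sum>y\<in>I. (if x = y \<and> x \<in> I then 1 else 0) * B y z) = B x z" .
qed

lemma mm_idm_right: "finite I \<Longrightarrow> supp_in X I B \<Longrightarrow> mm I B (idm I) = B"
  unfolding mm_def idm_def supp_in_def
proof (intro ext)
  fix x z assume fin: "finite I" and h: "\<forall>x y. B x y \<noteq> 0 \<longrightarrow> x \<in> X \<and> y \<in> I"
  have "(\<Sum>y\<in>I. B x y * (if y = z \<and> y \<in> I then 1 else 0)) = (\<Sum>y\<in>I. if y = z then B x z else 0)"
    by (rule sum.cong) auto
  also have "\<dots> = B x z" using h fin by (cases "z \<in> I") (auto simp: sum.delta)
  finally show "(\<Sum>y\<in>I. B x y * (if y = z \<and> y \<in> I then 1 else 0)) = B x z" .
qed

lemma supp_idm: "supp_in I I (idm I)"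
  by (auto simp: supp_in_def idm_def split: if_splits)

lemma supp_mm: "supp_in X J A \<Longrightarrow> supp_in J Y B \<Longrightarrow> supp_in X Y (mm I A B)"
  unfolding supp_in_def mm_def
  by (metis (mono_tags, lifting) mult_not_zero sum.neutral)

lemma supp_mm_l: "supp_in X J A \<Longrightarrow> supp_in X UNIV (mm I A B)"
  unfolding supp_in_def mm_def
  by (metis (mono_tags, lifting) mult_not_zero sum.neutral UNIV_I)

lemma supp_mm_r: "supp_in J Y B \<Longrightarrow> supp_in UNIV Y (mm I A B)"
  unfolding supp_in_def mm_def
  by (metis (mono_tags, lifting) mult_not_zero sum.neutral UNIV_I)

lemma supp_in_mono: "supp_in X Y A \<Longrightarrow> X \<subseteq> X' \<Longrightarrow> Y \<subseteq> Y' \<Longrightarrow> supp_in X' Y' A"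
  by (auto simp: supp_in_def)

lemma mm_add_left: "mm I (\<lambda>x y. A x y + A' x y) B = (\<lambda>x z. mm I A B x z + mm I A' B x z)"
  by (simp add: mm_def distrib_right sum.distrib)

lemma mm_add_right: "mm I A (\<lambda>x y. B x y + B' x y) = (\<lambda>x z. mm I A B x z + mm I A B' x z)"
  by (simp add: mm_def distrib_left sum.distrib)

lemma mm_scal_left: "mm I (\<lambda>x y. c * A x y) B = (\<lambda>x z. c * mm I A B x z)"
  by (simp add: mm_def sum_distrib_left mult.assoc)

lemma mm_scal_right: "mm I A (\<lambda>x y. c * B x y) = (\<lambda>x z. c * mm I A B x z)"
  by (simp add: mm_def sum_distrib_left mult.left_commute)

lemma mm_sum_left: "mm I (\<lambda>x y. \<Sum>j\<in>K. A j x y) B = (\<lambda>x z. \<Sum>j\<in>K. mm I (A j) B x z)"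
  by (simp add: mm_def sum_distrib_right sum.swap[of _ I])

lemma mm_sum_right: "mm I A (\<lambda>x y. \<Sum>j\<in>K. B j x y) = (\<lambda>x z. \<Sum>j\<in>K. mm I A (B j) x z)"
  by (simp add: mm_def sum_distrib_left sum.swap[of _ I])

lemma mm_restrict_left: "supp_in X J A \<Longrightarrow> J \<subseteq> I \<Longrightarrow> finite I \<Longrightarrow> mm I A B = mm J A B"
  unfolding mm_def supp_in_def
  by (intro ext sum.mono_neutral_right) auto


lemma idem_factor_step:
  fixes E :: "'i \<Rightarrow> 'i \<Rightarrow> 'k::field"
  assumes fin: "finite I" and supp: "supp_in I I E" and idem: "mm I E E = E"
    and a0: "a0 \<in> I" and b0: "b0 \<in> I" and nz: "E a0 b0 \<noteq> 0"
  defines "E' \<equiv> (\<lambda>a b. E a b - E a b0 * E a0 b / E a0 b0)"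
  shows "supp_in I I E'" "mm I E' E = E'" "mm I E E' = E'" "\<And>a. E' a b0 = 0" "\<And>b. E' a0 b = 0"
    "mm I E' E' = E'"
proof -
  let ?c = "E a0 b0"
  have EE: "\<And>a b. (\<Sum>c\<in>I. E a c * E c b) = E a b"
    using idem by (simp add: mm_def fun_eq_iff)
  show s: "supp_in I I E'"
    unfolding supp_in_def
  proof (intro allI impI)
    fix x y assume h: "E' x y \<noteq> 0"
    have "x \<in> I"
    proof (rule ccontr)
      assume "x \<notin> I" hence "E x y = 0" "E x b0 = 0" using supp by (auto simp: supp_in_def)
      thus False using h by (simp add: E'_def)
    qed
    moreover have "y \<in> I"
    proof (rule ccontr)
      assume "y \<notin> I" hence "E x y = 0" "E a0 y = 0" using supp by (auto simp: supp_in_def)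
      thus False using h by (simp add: E'_def)
    qed
    ultimately show "x \<in> I \<and> y \<in> I" by simp
  qed
  show c0: "\<And>a. E' a b0 = 0" using nz by (simp add: E'_def)
  show "\<And>b. E' a0 b = 0" using nz by (simp add: E'_def)
  show e1: "mm I E' E = E'"
  proof (intro ext)
    fix a b
    have "mm I E' E a b = (\<Sum>c\<in>I. E a c * E c b) - E a b0 / ?c * (\<Sum>c\<in>I. E a0 c * E c b)"
      by (simp add: mm_def E'_def algebra_simps sum_subtractf sum_distrib_left sum_divide_distrib)
    also have "\<dots> = E' a b" by (simp add: EE E'_def)
    finally show "mm I E' E a b = E' a b" .
  qed
  show "mm I E E' = E'"
  proof (intro ext)
    fix a b
    have "mm I E E' a b = (\<Sum>c\<in>I. E a c * E c b) - E a0 b / ?c * (\<Sum>c\<in>I. E a c * E c b0)"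
      by (simp add: mm_def E'_def algebra_simps sum_subtractf sum_distrib_left sum_divide_distrib)
    also have "\<dots> = E' a b" by (simp add: EE E'_def)
    finally show "mm I E E' a b = E' a b" .
  qed
  show "mm I E' E' = E'"
  proof (intro ext)
    fix a b
    have "mm I E' E' a b = (\<Sum>c\<in>I. E' a c * E c b) - E a0 b / ?c * (\<Sum>c\<in>I. E' a c * E c b0)"
    proof -
      have "\<And>c. E' c b = E c b - E c b0 * E a0 b / ?c" by (simp add: E'_def)
      hence "mm I E' E' a b = (\<Sum>c\<in>I. E' a c * (E c b - E c b0 * E a0 b / ?c))"
        by (simp add: mm_def)
      thus ?thesis by (simp add: algebra_simps sum_subtractf sum_distrib_left sum_divide_distrib)
    qed
    also have "\<dots> = E' a b - E a0 b / ?c * E' a b0"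
      using e1 by (simp add: mm_def fun_eq_iff)
    also have "\<dots> = E' a b" using c0 by simp
    finally show "mm I E' E' a b = E' a b" .
  qed
qed

lemma idem_factor:
  fixes E :: "'i \<Rightarrow> 'i \<Rightarrow> 'k::field"
  assumes "finite I" "supp_in I I E" "mm I E E = E"
  shows "\<exists>(r::nat) A B. supp_in I {..<r} A \<and> supp_in {..<r} I B \<and> mm {..<r} A B = E \<and> mm I B A = idm {..<r}"
  using assms
proof (induction "card {a\<in>I. \<exists>b\<in>I. E a b \<noteq> 0}" arbitrary: E rule: less_induct)
  case less
  note fin = less.prems(1) and supp = less.prems(2) and idem = less.prems(3)
  show ?case
  proof (cases "\<forall>a\<in>I. \<forall>b\<in>I. E a b = 0")
    case True
    hence E0: "E = (\<lambda>a b. 0)" using supp unfolding supp_in_def fun_eq_iff by metis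
    have "supp_in I {..<0::nat} (\<lambda>(a::'i) (b::nat). 0::'k) \<and> supp_in {..<0} I (\<lambda>(a::nat) (b::'i). 0::'k) \<and>
      mm {..<0} (\<lambda>(a::'i) (b::nat). 0::'k) (\<lambda>a b. 0) = E \<and> mm I (\<lambda>(a::nat) (b::'i). 0::'k) (\<lambda>a b. 0) = idm {..<0}"
      by (simp add: supp_in_def mm_def idm_def E0 fun_eq_iff)
    thus ?thesis by blast
  next
    case False
    then obtain a0 b0 where a0: "a0 \<in> I" and b0: "b0 \<in> I" and nz: "E a0 b0 \<noteq> 0" by blast
    define E' where "E' \<equiv> (\<lambda>a b. E a b - E a b0 * E a0 b / E a0 b0)"
    note st = idem_factor_step[OF fin supp idem a0 b0 nz, folded E'_def]
    have sub: "{a\<in>I. \<exists>b\<in>I. E' a b \<noteq> 0} \<subset> {a\<in>I. \<exists>b\<in>I. E a b \<noteq> 0}"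
    proof
      show "{a\<in>I. \<exists>b\<in>I. E' a b \<noteq> 0} \<subseteq> {a\<in>I. \<exists>b\<in>I. E a b \<noteq> 0}"
        using b0 by (auto simp: E'_def) (metis diff_zero div_0 mult_zero_left)
      show "{a\<in>I. \<exists>b\<in>I. E' a b \<noteq> 0} \<noteq> {a\<in>I. \<exists>b\<in>I. E a b \<noteq> 0}"
      proof -
        have "a0 \<in> {a\<in>I. \<exists>b\<in>I. E a b \<noteq> 0}" using a0 b0 nz by blast
        moreover have "a0 \<notin> {a\<in>I. \<exists>b\<in>I. E' a b \<noteq> 0}" using nz by (simp add: E'_def)
        ultimately show ?thesis by blast
      qed
    qed
    have "card {a\<in>I. \<exists>b\<in>I. E' a b \<noteq> 0} < card {a\<in>I. \<exists>b\<in>I. E a b \<noteq> 0}"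
      by (rule psubset_card_mono[OF _ sub]) (use fin in auto)
    from less.hyps[OF this fin st(1) st(6)] obtain r :: nat and A' B' where
      sA: "supp_in I {..<r} A'" and sB: "supp_in {..<r} I B'" and AB: "mm {..<r} A' B' = E'"
      and BA: "mm I B' A' = idm {..<r}" by blast
    define A where "A = (\<lambda>a l. if l < r then A' a l else if l = r then E a b0 else 0)"
    define B where "B = (\<lambda>l b. if l < r then B' l b else if l = r then E a0 b / E a0 b0 else 0)"
    have BE: "mm I B' E' = B'"
    proof -
      have "mm I B' E' = mm {..<r} (mm I B' A') B'" by (simp add: AB mm_assoc[OF fin finite_lessThan])
      also have "\<dots> = B'" using BA mm_idm_left[OF _ sB] by simp
      finally show ?thesis .
    qed
    have EA: "mm I E' A' = A'"
    proof -
      have "mm I E' A' = mm {..<r} A' (mm I B' A')" by (simp add: AB mm_assoc[OF finite_lessThan fin, symmetric])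
      also have "\<dots> = A'" using BA mm_idm_right[OF _ sA] by simp
      finally show ?thesis .
    qed
    have z1: "\<And>a. E' a b0 = 0" and z2: "\<And>b. E' a0 b = 0" using nz by (simp_all add: E'_def)
    have EE: "\<And>a b. (\<Sum>c\<in>I. E a c * E c b) = E a b"
      using idem by (simp add: mm_def fun_eq_iff)
    have Bu: "(\<Sum>a\<in>I. B' l a * E a b0) = 0" for l
    proof -
      have "(\<Sum>a\<in>I. B' l a * E a b0) = mm I (mm I B' E') E l b0" using BE by (simp add: mm_def)
      also have "\<dots> = mm I B' (mm I E' E) l b0" by (simp add: mm_assoc[OF fin fin])
      also have "\<dots> = 0" using st(2) z1 by (simp add: mm_def)
      finally show ?thesis .
    qed
    have wA: "(\<Sum>a\<in>I. E a0 a / E a0 b0 * A' a l) = 0" for l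
    proof -
      have "(\<Sum>a\<in>I. E a0 a / E a0 b0 * A' a l) = mm I E (mm I E' A') a0 l / E a0 b0"
        using EA by (simp add: mm_def sum_divide_distrib)
      also have "\<dots> = mm I (mm I E E') A' a0 l / E a0 b0" by (simp add: mm_assoc[OF fin fin])
      also have "\<dots> = 0" using st(3) z2 by (simp add: mm_def)
      finally show ?thesis .
    qed
    have wu: "(\<Sum>a\<in>I. E a0 a / E a0 b0 * E a b0) = 1"
      using EE[of a0 b0] nz by (simp add: sum_divide_distrib[symmetric])
    show ?thesis
    proof (intro exI[of _ "Suc r"] exI[of _ A] exI[of _ B] conjI)
      show "supp_in I {..<Suc r} A"
        using sA supp b0 by (auto simp: supp_in_def A_def split: if_splits)
      show "supp_in {..<Suc r} I B"
        using sB supp a0 by (auto simp: supp_in_def B_def split: if_splits)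
      show "mm {..<Suc r} A B = E"
      proof (intro ext)
        fix a b
        have "mm {..<Suc r} A B a b = mm {..<r} A' B' a b + E a b0 * (E a0 b / E a0 b0)"
          by (simp add: mm_def A_def B_def)
        also have "\<dots> = E a b" using AB by (simp add: E'_def)
        finally show "mm {..<Suc r} A B a b = E a b" .
      qed
      show "mm I B A = idm {..<Suc r}"
      proof (intro ext)
        fix l l'
        show "mm I B A l l' = idm {..<Suc r} l l'"
        proof (cases "l < r")
          case True
          show ?thesis
          proof (cases "l' < r")
            case True
            thus ?thesis using \<open>l < r\<close> BA by (simp add: mm_def A_def B_def idm_def fun_eq_iff)
          next
            case False
            thus ?thesis using \<open>l < r\<close> Bu[of l] by (cases "l' = r") (auto simp: mm_def A_def B_def idm_def)
          qed
        next
          case False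
          show ?thesis
          proof (cases "l = r")
            case True
            show ?thesis
            proof (cases "l' < r")
              case True
              thus ?thesis using \<open>l = r\<close> wA[of l'] by (auto simp: mm_def A_def B_def idm_def)
            next
              case False
              thus ?thesis using \<open>l = r\<close> wu by (cases "l' = r") (auto simp: mm_def A_def B_def idm_def)
            qed
          next
            case False
            thus ?thesis using \<open>\<not> l < r\<close> by (auto simp: mm_def A_def B_def idm_def)
          qed
        qed
      qed
    qed
  qed
qed


lemma finite_idx: "finite (idx m)"
proof -
  have "idx m \<subseteq> {- int m..int m}" by (auto simp: idx_def)
  thus ?thesis by (rule finite_subset) simp
qed

lemma finite_tup: "finite (tup d m)"
proof -
  have "tup d m = {xs. set xs \<subseteq> idx m \<and> length xs = d}" by (auto simp: tup_def)
  thus ?thesis using finite_lists_length_eq[OF finite_idx] by simp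
qed

lemma supp_Tgen: "supp_in (tup d m) (tup d m) (Tgen d Q q m i)"
  by (auto simp: supp_in_def Tgen_def split: if_splits)

lemma CHom_iff: "f \<in> CHom d Q q m m' \<longleftrightarrow> supp_in (tup d m') (tup d m) f \<and>
   (\<forall>i<d. mm (tup d m) f (Tgen d Q q m i) = mm (tup d m') (Tgen d Q q m' i) f)"
  by (simp add: CHom_def supp_in_def tmul_mm)

lemma CHom_supp: "f \<in> CHom d Q q m m' \<Longrightarrow> supp_in (tup d m') (tup d m) f"
  by (simp add: CHom_iff)

lemma CHom_comp:
  assumes f: "f \<in> CHom d Q q m m'" and g: "g \<in> CHom d Q q m' m''"
  shows "mm (tup d m') g f \<in> CHom d Q q m m''"
  unfolding CHom_iff
proof (intro conjI allI impI)
  show "supp_in (tup d m'') (tup d m) (mm (tup d m') g f)"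
    using f g by (intro supp_mm) (auto simp: CHom_iff)
  fix i assume i: "i < d"
  have fi: "mm (tup d m) f (Tgen d Q q m i) = mm (tup d m') (Tgen d Q q m' i) f" using f i by (simp add: CHom_iff)
  have gi: "mm (tup d m') g (Tgen d Q q m' i) = mm (tup d m'') (Tgen d Q q m'' i) g" using g i by (simp add: CHom_iff)
  have "mm (tup d m) (mm (tup d m') g f) (Tgen d Q q m i) = mm (tup d m') g (mm (tup d m) f (Tgen d Q q m i))"
    by (simp add: mm_assoc finite_tup)
  also have "\<dots> = mm (tup d m') (mm (tup d m') g (Tgen d Q q m' i)) f"
    by (simp add: fi mm_assoc finite_tup)
  also have "\<dots> = mm (tup d m'') (Tgen d Q q m'' i) (mm (tup d m') g f)"
    by (simp add: gi mm_assoc finite_tup)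
  finally show "mm (tup d m) (mm (tup d m') g f) (Tgen d Q q m i) = mm (tup d m'') (Tgen d Q q m'' i) (mm (tup d m') g f)" .
qed

lemma tid_left: "f \<in> CHom d Q q m m' \<Longrightarrow> mm (tup d m') (tid d m') f = f"
  unfolding tid_idm by (rule mm_idm_left[OF finite_tup CHom_supp])

lemma tid_right: "f \<in> CHom d Q q m m' \<Longrightarrow> mm (tup d m) f (tid d m) = f"
  unfolding tid_idm by (rule mm_idm_right[OF finite_tup CHom_supp])

lemma CHom_tid: "tid d m \<in> CHom d Q q m m"
  unfolding CHom_iff tid_idm
proof (intro conjI allI impI)
  show "supp_in (tup d m) (tup d m) (idm (tup d m))" by (rule supp_idm)
  fix i
  show "mm (tup d m) (idm (tup d m)) (Tgen d Q q m i) = mm (tup d m) (Tgen d Q q m i) (idm (tup d m))"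
    by (simp only: mm_idm_left[OF finite_tup supp_Tgen] mm_idm_right[OF finite_tup supp_Tgen])
qed

lemma supp_add: fixes f g :: "'x \<Rightarrow> 'y \<Rightarrow> 'k::comm_monoid_add" shows "supp_in X Y f \<Longrightarrow> supp_in X Y g \<Longrightarrow> supp_in X Y (\<lambda>x y. f x y + g x y)"
  unfolding supp_in_def
proof (intro allI impI)
  fix x y assume "\<forall>x y. f x y \<noteq> 0 \<longrightarrow> x \<in> X \<and> y \<in> Y" "\<forall>x y. g x y \<noteq> 0 \<longrightarrow> x \<in> X \<and> y \<in> Y"
    "f x y + g x y \<noteq> 0"
  moreover have "f x y \<noteq> 0 \<or> g x y \<noteq> 0" using \<open>f x y + g x y \<noteq> 0\<close> by auto
  ultimately show "x \<in> X \<and> y \<in> Y" by blast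
qed

lemma CHom_add: "f \<in> CHom d Q q m m' \<Longrightarrow> g \<in> CHom d Q q m m' \<Longrightarrow> (\<lambda>x y. f x y + g x y) \<in> CHom d Q q m m'"
  unfolding CHom_iff by (simp only: supp_add mm_add_left mm_add_right) simp

lemma CHom_scal: "f \<in> CHom d Q q m m' \<Longrightarrow> (\<lambda>x y. c * f x y) \<in> CHom d Q q m m'"
  unfolding CHom_iff by (simp only: mm_scal_left mm_scal_right) (simp add: supp_in_def, blast)

lemma CHom_zero: "(\<lambda>x y. 0) \<in> CHom d Q q m m'"
  unfolding CHom_iff by (auto simp: supp_in_def mm_def)

lemma CHom_sum: "finite K \<Longrightarrow> (\<And>j. j \<in> K \<Longrightarrow> f j \<in> CHom d Q q m m') \<Longrightarrow> (\<lambda>x y. \<Sum>j\<in>K. f j x y) \<in> CHom d Q q m m'"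
proof (induction K rule: finite_induct)
  case empty thus ?case using CHom_zero by simp
next
  case (insert j K)
  have "(\<lambda>x y. f j x y + (\<Sum>j\<in>K. f j x y)) \<in> CHom d Q q m m'"
    using insert by (intro CHom_add) auto
  thus ?case using insert by simp
qed


lemma mm_sum_right': "(\<lambda>x y. \<Sum>l\<in>K. mm I A (B l) x y) = mm I A (\<lambda>x y. \<Sum>l\<in>K. B l x y)"
  by (simp add: mm_sum_right)

lemma mm_sum_left': "(\<lambda>x y. \<Sum>l\<in>K. mm I (A l) B x y) = mm I (\<lambda>x y. \<Sum>l\<in>K. A l x y) B"
  by (simp add: mm_sum_left)

locale morita =
  fixes d :: nat and Q q :: "'k::field" and n :: nat
    and J :: "nat \<Rightarrow> 'j set" and p :: "nat \<Rightarrow> 'j \<Rightarrow> 'k tmat" and ii :: "nat \<Rightarrow> 'j \<Rightarrow> 'k tmat"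
  assumes n1: "1 \<le> n"
    and finJ: "finite (J m)"
    and pC: "1 \<le> m \<Longrightarrow> j \<in> J m \<Longrightarrow> p m j \<in> CHom d Q q m n"
    and iC: "1 \<le> m \<Longrightarrow> j \<in> J m \<Longrightarrow> ii m j \<in> CHom d Q q n m"
    and splt: "1 \<le> m \<Longrightarrow> (\<lambda>x y. \<Sum>j\<in>J m. mm (tup d n) (ii m j) (p m j) x y) = tid d m"
begin

abbreviation C where "C m m' \<equiv> CHom d Q q m m'"
abbreviation cp :: "nat \<Rightarrow> 'k tmat \<Rightarrow> 'k tmat \<Rightarrow> 'k tmat" where "cp m g f \<equiv> mm (tup d m) g f"

lemma cpC: "f \<in> C m m' \<Longrightarrow> g \<in> C m' m'' \<Longrightarrow> cp m' g f \<in> C m m''"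
  by (rule CHom_comp)

lemma cp_assoc: "cp m (cp m' A B) X = cp m' A (cp m B X)"
  by (simp add: mm_assoc finite_tup)

lemma resolve0:
  assumes m: "1 \<le> m" and B: "supp_in (tup d m) Y B"
  shows "(\<lambda>x y. \<Sum>l\<in>J m. cp n (ii m l) (cp m (p m l) B) x y) = B"
proof -
  have "(\<lambda>x y. \<Sum>l\<in>J m. cp n (ii m l) (cp m (p m l) B) x y) = (\<lambda>x y. \<Sum>l\<in>J m. cp m (cp n (ii m l) (p m l)) B x y)"
    by (simp add: cp_assoc)
  also have "\<dots> = cp m (\<lambda>x y. \<Sum>l\<in>J m. cp n (ii m l) (p m l) x y) B"
    by (rule mm_sum_left')
  also have "\<dots> = B" using splt[OF m] by (simp add: tid_idm mm_idm_left[OF finite_tup B])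
  finally show ?thesis .
qed

definition lfun :: "nat set \<Rightarrow> (nat \<Rightarrow> nat) \<Rightarrow> (nat \<Rightarrow> nat \<Rightarrow> 'k tmat \<Rightarrow> 'k nmat) \<Rightarrow> bool" where
  "lfun Ob D F \<longleftrightarrow>
     (\<forall>a\<in>Ob. \<forall>b\<in>Ob. \<forall>f\<in>C a b. supp_in {..<D b} {..<D a} (F a b f)) \<and>
     (\<forall>a\<in>Ob. \<forall>b\<in>Ob. \<forall>f\<in>C a b. \<forall>g\<in>C a b. \<forall>c.
        F a b (\<lambda>x y. f x y + g x y) = (\<lambda>i j. F a b f i j + F a b g i j) \<and>
        F a b (\<lambda>x y. c * f x y) = (\<lambda>i j. c * F a b f i j)) \<and>
     (\<forall>a\<in>Ob. \<forall>b\<in>Ob. \<forall>c\<in>Ob. \<forall>f\<in>C a b. \<forall>g\<in>C b c. F a c (cp b g f) = mm {..<D b} (F b c g) (F a b f)) \<and>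
     (\<forall>a\<in>Ob. F a a (tid d a) = idm {..<D a})"

lemma lfun_supp: "lfun Ob D F \<Longrightarrow> a \<in> Ob \<Longrightarrow> b \<in> Ob \<Longrightarrow> f \<in> C a b \<Longrightarrow> supp_in {..<D b} {..<D a} (F a b f)"
  by (simp add: lfun_def)
lemma lfun_add: "lfun Ob D F \<Longrightarrow> a \<in> Ob \<Longrightarrow> b \<in> Ob \<Longrightarrow> f \<in> C a b \<Longrightarrow> g \<in> C a b \<Longrightarrow>
   F a b (\<lambda>x y. f x y + g x y) = (\<lambda>i j. F a b f i j + F a b g i j)"
  by (simp add: lfun_def)
lemma lfun_scal: "lfun Ob D F \<Longrightarrow> a \<in> Ob \<Longrightarrow> b \<in> Ob \<Longrightarrow> f \<in> C a b \<Longrightarrow>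
   F a b (\<lambda>x y. c * f x y) = (\<lambda>i j. c * F a b f i j)"
  by (simp add: lfun_def)
lemma lfun_comp: "lfun Ob D F \<Longrightarrow> a \<in> Ob \<Longrightarrow> b \<in> Ob \<Longrightarrow> c \<in> Ob \<Longrightarrow> f \<in> C a b \<Longrightarrow> g \<in> C b c \<Longrightarrow>
   F a c (cp b g f) = mm {..<D b} (F b c g) (F a b f)"
  by (simp add: lfun_def)
lemma lfun_id: "lfun Ob D F \<Longrightarrow> a \<in> Ob \<Longrightarrow> F a a (tid d a) = idm {..<D a}"
  by (simp add: lfun_def)

lemma lfun_zero: assumes "lfun Ob D F" "a \<in> Ob" "b \<in> Ob" shows "F a b (\<lambda>x y. 0) = (\<lambda>i j. 0)"
proof -
  have "F a b (\<lambda>x y. 0 * (\<lambda>x y. 0::'k) x y) = (\<lambda>i j. 0 * F a b (\<lambda>x y. 0) i j)"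
    by (rule lfun_scal[OF assms CHom_zero])
  thus ?thesis by simp
qed

lemma lfun_sum:
  assumes G: "lfun Ob D F" "a \<in> Ob" "b \<in> Ob" and K: "finite K" and f: "\<And>l. l \<in> K \<Longrightarrow> f l \<in> C a b"
  shows "F a b (\<lambda>x y. \<Sum>l\<in>K. f l x y) = (\<lambda>i j. \<Sum>l\<in>K. F a b (f l) i j)"
  using K f
proof (induction K rule: finite_induct)
  case empty thus ?case using lfun_zero[OF G] by simp
next
  case (insert l K)
  have "F a b (\<lambda>x y. \<Sum>l\<in>insert l K. f l x y) = F a b (\<lambda>x y. f l x y + (\<Sum>l\<in>K. f l x y))"
    using insert by simp
  also have "\<dots> = (\<lambda>i j. F a b (f l) i j + F a b (\<lambda>x y. \<Sum>l\<in>K. f l x y) i j)"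
    using insert by (intro lfun_add[OF G]) (auto intro!: CHom_sum)
  also have "\<dots> = (\<lambda>i j. \<Sum>l\<in>insert l K. F a b (f l) i j)"
    using insert by simp
  finally show ?case .
qed

definition Ix :: "nat \<Rightarrow> nat \<Rightarrow> ('j \<times> nat) set" where
  "Ix N m = J m \<times> {..<N}"

lemma finite_Ix: "finite (Ix N m)"
  by (simp add: Ix_def finJ)

definition Ft :: "nat \<Rightarrow> ('k tmat \<Rightarrow> 'k nmat) \<Rightarrow> nat \<Rightarrow> nat \<Rightarrow> 'k tmat \<Rightarrow> ('j \<times> nat) \<Rightarrow> ('j \<times> nat) \<Rightarrow> 'k" where
  "Ft N \<rho> m m' f = (\<lambda>(j,a) (k,b). if j \<in> J m' \<and> k \<in> J m then \<rho> (cp m' (p m' j) (cp m f (ii m k))) a b else 0)"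

lemma sum_Ix: "(\<Sum>x\<in>Ix N m. g x) = (\<Sum>l\<in>J m. \<Sum>c<N. g (l, c))"
  by (simp add: Ix_def sum.cartesian_product)

lemma XC: "1 \<le> m \<Longrightarrow> 1 \<le> m' \<Longrightarrow> j \<in> J m' \<Longrightarrow> k \<in> J m \<Longrightarrow> f \<in> C m m' \<Longrightarrow>
   cp m' (p m' j) (cp m f (ii m k)) \<in> C n n"
  by (intro cpC iC pC) auto

lemma Ft_supp:
  assumes G: "lfun Ob D F" "n \<in> Ob" and m: "1 \<le> m" "1 \<le> m'" and f: "f \<in> C m m'"
  shows "supp_in (Ix (D n) m') (Ix (D n) m) (Ft (D n) (F n n) m m' f)"
  unfolding supp_in_def Ix_def Ft_def
proof (clarify)
  fix j a k b assume h: "(if j \<in> J m' \<and> k \<in> J m then F n n (cp m' (p m' j) (cp m f (ii m k))) a b else 0) \<noteq> 0"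
  hence jk: "j \<in> J m'" "k \<in> J m" by (auto split: if_splits)
  with h have "F n n (cp m' (p m' j) (cp m f (ii m k))) a b \<noteq> 0" by simp
  moreover have "supp_in {..<D n} {..<D n} (F n n (cp m' (p m' j) (cp m f (ii m k))))"
    using lfun_supp[OF G(1) G(2) G(2) XC[OF m jk(1,2) f]] .
  ultimately have "a < D n" "b < D n" by (auto simp: supp_in_def)
  thus "(j, a) \<in> J m' \<times> {..<D n} \<and> (k, b) \<in> J m \<times> {..<D n}" using jk by simp
qed

lemma mm_apply: "mm I A B x z = (\<Sum>y\<in>I. A x y * B y z)"
  by (simp add: mm_def)

lemma core:
  assumes G: "lfun Ob D F" "n \<in> Ob" "a \<in> Ob" "b \<in> Ob" and m: "1 \<le> m"
    and U: "U \<in> C m b" and V: "V \<in> C a m"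
  shows "(\<Sum>l\<in>J m. \<Sum>c<D n. F n b (cp m U (ii m l)) i c * F a n (cp m (p m l) V) c j) = F a b (cp m U V) i j"
proof -
  have X: "l \<in> J m \<Longrightarrow> cp m U (ii m l) \<in> C n b" for l using U m by (intro cpC iC) auto
  have Y: "l \<in> J m \<Longrightarrow> cp m (p m l) V \<in> C a n" for l using V m by (intro cpC pC) auto
  have "(\<Sum>l\<in>J m. \<Sum>c<D n. F n b (cp m U (ii m l)) i c * F a n (cp m (p m l) V) c j)
      = (\<Sum>l\<in>J m. F a b (cp n (cp m U (ii m l)) (cp m (p m l) V)) i j)"
  proof (rule sum.cong)
    fix l assume l: "l \<in> J m"
    show "(\<Sum>c<D n. F n b (cp m U (ii m l)) i c * F a n (cp m (p m l) V) c j) = F a b (cp n (cp m U (ii m l)) (cp m (p m l) V)) i j"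
      using lfun_comp[OF G(1) G(3) G(2) G(4) Y[OF l] X[OF l]] by (simp add: mm_apply)
  qed simp
  also have "\<dots> = F a b (\<lambda>x y. \<Sum>l\<in>J m. cp n (cp m U (ii m l)) (cp m (p m l) V) x y) i j"
    using lfun_sum[OF G(1) G(3) G(4) finJ, where f="\<lambda>l. cp n (cp m U (ii m l)) (cp m (p m l) V)"] X Y
    by (simp add: CHom_comp)
  also have "(\<lambda>x y. \<Sum>l\<in>J m. cp n (cp m U (ii m l)) (cp m (p m l) V) x y) = cp m U V"
  proof -
    have "(\<lambda>x y. \<Sum>l\<in>J m. cp n (cp m U (ii m l)) (cp m (p m l) V) x y)
        = (\<lambda>x y. \<Sum>l\<in>J m. cp m U (cp n (ii m l) (cp m (p m l) V)) x y)"
      by (simp add: cp_assoc)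
    also have "\<dots> = cp m U (\<lambda>x y. \<Sum>l\<in>J m. cp n (ii m l) (cp m (p m l) V) x y)"
      by (rule mm_sum_right')
    also have "\<dots> = cp m U V" using resolve0[OF m CHom_supp[OF V]] by simp
    finally show ?thesis .
  qed
  finally show ?thesis .
qed

lemma FtA:
  assumes G: "lfun Ob D F" "n \<in> Ob" and m: "1 \<le> m" "1 \<le> m'" "1 \<le> m''"
    and f: "f \<in> C m m'" and g: "g \<in> C m' m''"
  shows "mm (Ix (D n) m') (Ft (D n) (F n n) m' m'' g) (Ft (D n) (F n n) m m' f) = Ft (D n) (F n n) m m'' (cp m' g f)"
proof (intro ext)
  fix x z :: "'j \<times> nat"
  obtain j a where x: "x = (j,a)" by fastforce
  obtain k b where z: "z = (k,b)" by fastforce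
  show "mm (Ix (D n) m') (Ft (D n) (F n n) m' m'' g) (Ft (D n) (F n n) m m' f) x z = Ft (D n) (F n n) m m'' (cp m' g f) x z"
  proof (cases "j \<in> J m'' \<and> k \<in> J m")
    case True
    have U: "cp m'' (p m'' j) g \<in> C m' n" using True m g by (intro cpC pC) auto
    have V: "cp m f (ii m k) \<in> C n m'" using True m f by (intro cpC iC) auto
    have "mm (Ix (D n) m') (Ft (D n) (F n n) m' m'' g) (Ft (D n) (F n n) m m' f) x z =
       (\<Sum>l\<in>J m'. \<Sum>c<D n. F n n (cp m' (cp m'' (p m'' j) g) (ii m' l)) a c * F n n (cp m' (p m' l) (cp m f (ii m k))) c b)"
      using True by (simp add: x z mm_apply sum_Ix Ft_def cp_assoc)
    also have "\<dots> = F n n (cp m' (cp m'' (p m'' j) g) (cp m f (ii m k))) a b"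
      by (rule core[OF G(1) G(2) G(2) G(2) m(2) U V])
    also have "\<dots> = Ft (D n) (F n n) m m'' (cp m' g f) x z"
      using True by (simp add: x z Ft_def cp_assoc)
    finally show ?thesis .
  next
    case False
    thus ?thesis by (auto simp: x z mm_apply sum_Ix Ft_def)
  qed
qed

definition Rw :: "(nat \<Rightarrow> nat \<Rightarrow> 'k tmat \<Rightarrow> 'k nmat) \<Rightarrow> nat \<Rightarrow> nat \<Rightarrow> 'k tmat \<Rightarrow> nat \<Rightarrow> ('j \<times> nat) \<Rightarrow> 'k" where
  "Rw F m' m h = (\<lambda>a (k,b). if k \<in> J m then F n m' (cp m h (ii m k)) a b else 0)"

definition Cl :: "(nat \<Rightarrow> nat \<Rightarrow> 'k tmat \<Rightarrow> 'k nmat) \<Rightarrow> nat \<Rightarrow> nat \<Rightarrow> 'k tmat \<Rightarrow> ('j \<times> nat) \<Rightarrow> nat \<Rightarrow> 'k" where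
  "Cl F m m' h = (\<lambda>(j,a) b. if j \<in> J m then F m' n (cp m (p m j) h) a b else 0)"

definition Dg :: "nat \<Rightarrow> 'k nmat \<Rightarrow> ('j \<times> nat) \<Rightarrow> ('j \<times> nat) \<Rightarrow> 'k" where
  "Dg m \<phi> = (\<lambda>(j,a) (k,b). if j = k \<and> j \<in> J m then \<phi> a b else 0)"

lemma R1:
  assumes G: "lfun Ob D F" "n \<in> Ob" "m' \<in> Ob" and m: "1 \<le> m0" "1 \<le> m"
    and f: "f \<in> C m0 m" and h: "h \<in> C m m'"
  shows "mm (Ix (D n) m) (Rw F m' m h) (Ft (D n) (F n n) m0 m f) = Rw F m' m0 (cp m h f)"
proof (intro ext)
  fix a :: nat and z :: "'j \<times> nat"
  obtain k b where z: "z = (k,b)" by fastforce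
  show "mm (Ix (D n) m) (Rw F m' m h) (Ft (D n) (F n n) m0 m f) a z = Rw F m' m0 (cp m h f) a z"
  proof (cases "k \<in> J m0")
    case True
    have V: "cp m0 f (ii m0 k) \<in> C n m" using True m f by (intro cpC iC) auto
    have "mm (Ix (D n) m) (Rw F m' m h) (Ft (D n) (F n n) m0 m f) a z =
       (\<Sum>l\<in>J m. \<Sum>c<D n. F n m' (cp m h (ii m l)) a c * F n n (cp m (p m l) (cp m0 f (ii m0 k))) c b)"
      using True by (simp add: z mm_apply sum_Ix Ft_def Rw_def cp_assoc)
    also have "\<dots> = F n m' (cp m h (cp m0 f (ii m0 k))) a b"
      by (rule core[OF G(1) G(2) G(2) G(3) m(2) h V])
    also have "\<dots> = Rw F m' m0 (cp m h f) a z"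
      using True by (simp add: z Rw_def cp_assoc)
    finally show ?thesis .
  next
    case False
    thus ?thesis by (auto simp: z mm_apply sum_Ix Ft_def Rw_def)
  qed
qed

lemma R2:
  assumes G: "lfun Ob D F" "n \<in> Ob" "m'' \<in> Ob" and m: "1 \<le> m" "1 \<le> m'"
    and f: "f \<in> C m m'" and h: "h \<in> C m'' m"
  shows "mm (Ix (D n) m) (Ft (D n) (F n n) m m' f) (Cl F m m'' h) = Cl F m' m'' (cp m f h)"
proof (intro ext)
  fix b :: nat and x :: "'j \<times> nat"
  obtain j a where x: "x = (j,a)" by fastforce
  show "mm (Ix (D n) m) (Ft (D n) (F n n) m m' f) (Cl F m m'' h) x b = Cl F m' m'' (cp m f h) x b"
  proof (cases "j \<in> J m'")
    case True
    have U: "cp m' (p m' j) f \<in> C m n" using True m f by (intro cpC pC) auto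
    have "mm (Ix (D n) m) (Ft (D n) (F n n) m m' f) (Cl F m m'' h) x b =
       (\<Sum>l\<in>J m. \<Sum>c<D n. F n n (cp m (cp m' (p m' j) f) (ii m l)) a c * F m'' n (cp m (p m l) h) c b)"
      using True by (simp add: x mm_apply sum_Ix Ft_def Cl_def cp_assoc)
    also have "\<dots> = F m'' n (cp m (cp m' (p m' j) f) h) a b"
      by (rule core[OF G(1) G(2) G(3) G(2) m(1) U h])
    also have "\<dots> = Cl F m' m'' (cp m f h) x b"
      using True by (simp add: x Cl_def cp_assoc)
    finally show ?thesis .
  next
    case False
    thus ?thesis by (auto simp: x mm_apply sum_Ix Ft_def Cl_def)
  qed
qed

lemma R3:
  assumes G: "lfun Ob D F" "n \<in> Ob" "m'' \<in> Ob" and m: "1 \<le> m" "1 \<le> m0"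
    and h: "h \<in> C m'' m" and g: "g \<in> C m0 m''"
  shows "mm {..<D m''} (Cl F m m'' h) (Rw F m'' m0 g) = Ft (D n) (F n n) m0 m (cp m'' h g)"
proof (intro ext)
  fix x z :: "'j \<times> nat"
  obtain j a where x: "x = (j,a)" by fastforce
  obtain k b where z: "z = (k,b)" by fastforce
  show "mm {..<D m''} (Cl F m m'' h) (Rw F m'' m0 g) x z = Ft (D n) (F n n) m0 m (cp m'' h g) x z"
  proof (cases "j \<in> J m \<and> k \<in> J m0")
    case True
    have U: "cp m (p m j) h \<in> C m'' n" using True m h by (intro cpC pC) auto
    have V: "cp m0 g (ii m0 k) \<in> C n m''" using True m g by (intro cpC iC) auto
    have "mm {..<D m''} (Cl F m m'' h) (Rw F m'' m0 g) x z =
        mm {..<D m''} (F m'' n (cp m (p m j) h)) (F n m'' (cp m0 g (ii m0 k))) a b"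
      using True by (simp add: x z mm_apply Cl_def Rw_def)
    also have "\<dots> = F n n (cp m'' (cp m (p m j) h) (cp m0 g (ii m0 k))) a b"
      using lfun_comp[OF G(1) G(2) G(3) G(2) V U] by simp
    also have "\<dots> = Ft (D n) (F n n) m0 m (cp m'' h g) x z"
      using True by (simp add: x z Ft_def cp_assoc)
    finally show ?thesis .
  next
    case False
    thus ?thesis by (auto simp: x z mm_apply Ft_def Cl_def Rw_def)
  qed
qed

lemma R4:
  assumes G: "lfun Ob D F" "n \<in> Ob" "m' \<in> Ob" "m'' \<in> Ob" and m: "1 \<le> m"
    and h: "h \<in> C m m'" and h': "h' \<in> C m'' m"
  shows "mm (Ix (D n) m) (Rw F m' m h) (Cl F m m'' h') = F m'' m' (cp m h h')"
proof (intro ext)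
  fix a b
  have "mm (Ix (D n) m) (Rw F m' m h) (Cl F m m'' h') a b =
     (\<Sum>l\<in>J m. \<Sum>c<D n. F n m' (cp m h (ii m l)) a c * F m'' n (cp m (p m l) h') c b)"
    by (simp add: mm_apply sum_Ix Rw_def Cl_def)
  also have "\<dots> = F m'' m' (cp m h h') a b"
    by (rule core[OF G(1) G(2) G(4) G(3) m h h'])
  finally show "mm (Ix (D n) m) (Rw F m' m h) (Cl F m m'' h') a b = F m'' m' (cp m h h') a b" .
qed

lemma R5:
  assumes G: "lfun Ob D F" "n \<in> Ob" "m' \<in> Ob" "m'' \<in> Ob" and m: "1 \<le> m"
    and g: "g \<in> C m' m''" and h: "h \<in> C m m'"
  shows "mm {..<D m'} (F m' m'' g) (Rw F m' m h) = Rw F m'' m (cp m' g h)"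
proof (intro ext)
  fix a :: nat and z :: "'j \<times> nat"
  obtain k b where z: "z = (k,b)" by fastforce
  show "mm {..<D m'} (F m' m'' g) (Rw F m' m h) a z = Rw F m'' m (cp m' g h) a z"
  proof (cases "k \<in> J m")
    case True
    have V: "cp m h (ii m k) \<in> C n m'" using True m h by (intro cpC iC) auto
    have "mm {..<D m'} (F m' m'' g) (Rw F m' m h) a z = mm {..<D m'} (F m' m'' g) (F n m' (cp m h (ii m k))) a b"
      using True by (simp add: z mm_apply Rw_def)
    also have "\<dots> = F n m'' (cp m' g (cp m h (ii m k))) a b"
      using lfun_comp[OF G(1) G(2) G(3) G(4) V g] by simp
    also have "\<dots> = Rw F m'' m (cp m' g h) a z"
      using True by (simp add: z Rw_def cp_assoc)
    finally show ?thesis .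
  next
    case False
    thus ?thesis by (auto simp: z mm_apply Rw_def)
  qed
qed

lemma R6:
  assumes G: "lfun Ob D F" "n \<in> Ob" "m' \<in> Ob" "m'' \<in> Ob" and m: "1 \<le> m"
    and h: "h \<in> C m' m" and g: "g \<in> C m'' m'"
  shows "mm {..<D m'} (Cl F m m' h) (F m'' m' g) = Cl F m m'' (cp m' h g)"
proof (intro ext)
  fix b :: nat and x :: "'j \<times> nat"
  obtain j a where x: "x = (j,a)" by fastforce
  show "mm {..<D m'} (Cl F m m' h) (F m'' m' g) x b = Cl F m m'' (cp m' h g) x b"
  proof (cases "j \<in> J m")
    case True
    have U: "cp m (p m j) h \<in> C m' n" using True m h by (intro cpC pC) auto
    have "mm {..<D m'} (Cl F m m' h) (F m'' m' g) x b = mm {..<D m'} (F m' n (cp m (p m j) h)) (F m'' m' g) a b"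
      using True by (simp add: x mm_apply Cl_def)
    also have "\<dots> = F m'' n (cp m' (cp m (p m j) h) g) a b"
      using lfun_comp[OF G(1) G(4) G(3) G(2) g U] by simp
    also have "\<dots> = Cl F m m'' (cp m' h g) x b"
      using True by (simp add: x Cl_def cp_assoc)
    finally show ?thesis .
  next
    case False
    thus ?thesis by (auto simp: x mm_apply Cl_def)
  qed
qed

definition ntr :: "nat set \<Rightarrow> (nat \<Rightarrow> nat) \<Rightarrow> (nat \<Rightarrow> nat \<Rightarrow> 'k tmat \<Rightarrow> 'k nmat) \<Rightarrow> (nat \<Rightarrow> nat) \<Rightarrow> (nat \<Rightarrow> nat \<Rightarrow> 'k tmat \<Rightarrow> 'k nmat) \<Rightarrow> (nat \<Rightarrow> 'k nmat) \<Rightarrow> bool" where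
  "ntr Ob D F D' F' \<theta> \<longleftrightarrow> (\<forall>m\<in>Ob. supp_in {..<D' m} {..<D m} (\<theta> m)) \<and>
     (\<forall>m\<in>Ob. \<forall>m'\<in>Ob. \<forall>f\<in>C m m'. mm {..<D m'} (\<theta> m') (F m m' f) = mm {..<D' m} (F' m m' f) (\<theta> m))"

lemma ntr_supp: "ntr Ob D F D' F' \<theta> \<Longrightarrow> m \<in> Ob \<Longrightarrow> supp_in {..<D' m} {..<D m} (\<theta> m)"
  by (simp add: ntr_def)
lemma ntr_nat: "ntr Ob D F D' F' \<theta> \<Longrightarrow> m \<in> Ob \<Longrightarrow> m' \<in> Ob \<Longrightarrow> f \<in> C m m' \<Longrightarrow>
   mm {..<D m'} (\<theta> m') (F m m' f) = mm {..<D' m} (F' m m' f) (\<theta> m)"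
  by (simp add: ntr_def)

lemma DgL: fixes X :: "'j \<times> nat \<Rightarrow> 'z \<Rightarrow> 'k" shows "mm (Ix N m) (Dg m \<phi>) X = (\<lambda>(j,a) z. if j \<in> J m then \<Sum>c<N. \<phi> a c * X (j,c) z else 0)"
proof (intro ext)
  fix x :: "'j \<times> nat" and z :: 'z
  obtain j a where x: "x = (j,a)" by fastforce
  have "mm (Ix N m) (Dg m \<phi>) X x z = (\<Sum>l\<in>J m. \<Sum>c<N. (if j = l \<and> j \<in> J m then \<phi> a c else 0) * X (l, c) z)"
    by (simp add: x mm_apply sum_Ix Dg_def)
  also have "\<dots> = (\<Sum>l\<in>J m. if j = l then (\<Sum>c<N. \<phi> a c * X (l,c) z) else 0)"
    by (rule sum.cong) auto
  also have "\<dots> = (if j \<in> J m then \<Sum>c<N. \<phi> a c * X (j,c) z else 0)"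
    by (simp add: sum.delta finJ)
  finally show "mm (Ix N m) (Dg m \<phi>) X x z = (\<lambda>(j,a) z. if j \<in> J m then \<Sum>c<N. \<phi> a c * X (j,c) z else 0) x z"
    by (simp add: x)
qed

lemma DgR: fixes X :: "'x \<Rightarrow> 'j \<times> nat \<Rightarrow> 'k" shows "mm (Ix N m) X (Dg m \<phi>) = (\<lambda>x (k,b). if k \<in> J m then \<Sum>c<N. X x (k,c) * \<phi> c b else 0)"
proof (intro ext)
  fix z :: "'j \<times> nat" and x :: 'x
  obtain k b where z: "z = (k,b)" by fastforce
  have "mm (Ix N m) X (Dg m \<phi>) x z = (\<Sum>l\<in>J m. \<Sum>c<N. X x (l, c) * (if l = k \<and> l \<in> J m then \<phi> c b else 0))"
    by (simp add: z mm_apply sum_Ix Dg_def)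
  also have "\<dots> = (\<Sum>l\<in>J m. if k = l then (\<Sum>c<N. X x (l,c) * \<phi> c b) else 0)"
    by (rule sum.cong) auto
  also have "\<dots> = (if k \<in> J m then \<Sum>c<N. X x (k,c) * \<phi> c b else 0)"
    by (simp add: sum.delta finJ)
  finally show "mm (Ix N m) X (Dg m \<phi>) x z = (\<lambda>x (k,b). if k \<in> J m then \<Sum>c<N. X x (k,c) * \<phi> c b else 0) x z"
    by (simp add: z)
qed

lemma Dg_supp: "supp_in {..<N'} {..<N} \<phi> \<Longrightarrow> supp_in (Ix N' m) (Ix N m) (Dg m \<phi>)"
  by (auto simp: supp_in_def Dg_def Ix_def split: if_splits)

lemma Dg_id: "Dg m (idm {..<N}) = idm (Ix N m)"
  by (auto simp: Dg_def idm_def Ix_def fun_eq_iff)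

lemma Dg_mult: "mm (Ix N' m) (Dg m \<psi>) (Dg m \<phi>) = Dg m (mm {..<N'} \<psi> \<phi>)"
  unfolding DgL by (auto simp: Dg_def mm_apply fun_eq_iff intro!: sum.neutral)

lemma Dg1:
  assumes G: "lfun Ob D F" "lfun Ob D' F'" "n \<in> Ob" and th: "ntr Ob D F D' F' \<theta>"
    and m: "1 \<le> m" "1 \<le> m'" and f: "f \<in> C m m'"
  shows "mm (Ix (D n) m') (Dg m' (\<theta> n)) (Ft (D n) (F n n) m m' f) = mm (Ix (D' n) m) (Ft (D' n) (F' n n) m m' f) (Dg m (\<theta> n))"
proof (intro ext)
  fix x z :: "'j \<times> nat"
  obtain j a where x: "x = (j,a)" by fastforce
  obtain k b where z: "z = (k,b)" by fastforce
  show "mm (Ix (D n) m') (Dg m' (\<theta> n)) (Ft (D n) (F n n) m m' f) x z = mm (Ix (D' n) m) (Ft (D' n) (F' n n) m m' f) (Dg m (\<theta> n)) x z"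
  proof (cases "j \<in> J m' \<and> k \<in> J m")
    case True
    have X: "cp m' (p m' j) (cp m f (ii m k)) \<in> C n n" using True m f by (intro XC) auto
    show ?thesis using True ntr_nat[OF th G(3) G(3) X]
      by (simp add: x z DgL DgR Ft_def mm_apply fun_eq_iff)
  next
    case False
    thus ?thesis by (auto simp: x z DgL DgR Ft_def)
  qed
qed

lemma Dg4:
  assumes G: "lfun Ob D F" "lfun Ob D' F'" "n \<in> Ob" "m' \<in> Ob" and th: "ntr Ob D F D' F' \<theta>"
    and m: "1 \<le> m" and h: "h \<in> C m m'"
  shows "mm (Ix (D' n) m) (Rw F' m' m h) (Dg m (\<theta> n)) = mm {..<D m'} (\<theta> m') (Rw F m' m h)"
proof (intro ext)
  fix a :: nat and z :: "'j \<times> nat"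
  obtain k b where z: "z = (k,b)" by fastforce
  show "mm (Ix (D' n) m) (Rw F' m' m h) (Dg m (\<theta> n)) a z = mm {..<D m'} (\<theta> m') (Rw F m' m h) a z"
  proof (cases "k \<in> J m")
    case True
    have X: "cp m h (ii m k) \<in> C n m'" using True m h by (intro cpC iC) auto
    show ?thesis using True ntr_nat[OF th G(3) G(4) X]
      by (simp add: z DgR Rw_def mm_apply fun_eq_iff)
  next
    case False
    thus ?thesis by (auto simp: z DgR Rw_def mm_apply)
  qed
qed

lemma Rw_supp:
  assumes G: "lfun Ob D F" "n \<in> Ob" "m' \<in> Ob" and m: "1 \<le> m" and h: "h \<in> C m m'"
  shows "supp_in {..<D m'} (Ix (D n) m) (Rw F m' m h)"
  unfolding supp_in_def
proof (clarify)
  fix a k b assume nz: "Rw F m' m h a (k, b) \<noteq> 0"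
  hence k: "k \<in> J m" by (auto simp: Rw_def split: if_splits)
  have X: "cp m h (ii m k) \<in> C n m'" using k m h by (intro cpC iC) auto
  have "F n m' (cp m h (ii m k)) a b \<noteq> 0" using nz k by (simp add: Rw_def)
  with lfun_supp[OF G(1) G(2) G(3) X] show "a \<in> {..<D m'} \<and> (k, b) \<in> Ix (D n) m"
    using k by (auto simp: supp_in_def Ix_def)
qed

lemma Cl_supp:
  assumes G: "lfun Ob D F" "n \<in> Ob" "m' \<in> Ob" and m: "1 \<le> m" and h: "h \<in> C m' m"
  shows "supp_in (Ix (D n) m) {..<D m'} (Cl F m m' h)"
  unfolding supp_in_def
proof (clarify)
  fix j a b assume nz: "Cl F m m' h (j, a) b \<noteq> 0"
  hence j: "j \<in> J m" by (auto simp: Cl_def split: if_splits)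
  have X: "cp m (p m j) h \<in> C m' n" using j m h by (intro cpC pC) auto
  have "F m' n (cp m (p m j) h) a b \<noteq> 0" using nz j by (simp add: Cl_def)
  with lfun_supp[OF G(1) G(3) G(2) X] show "(j, a) \<in> Ix (D n) m \<and> b \<in> {..<D m'}"
    using j by (auto simp: supp_in_def Ix_def)
qed

lemma Ft_add:
  assumes G: "lfun Ob D F" "n \<in> Ob" and m: "1 \<le> m" "1 \<le> m'" and f: "f \<in> C m m'" and g: "g \<in> C m m'"
  shows "Ft (D n) (F n n) m m' (\<lambda>x y. f x y + g x y) = (\<lambda>x y. Ft (D n) (F n n) m m' f x y + Ft (D n) (F n n) m m' g x y)"
proof (intro ext)
  fix x z :: "'j \<times> nat"
  obtain j a where x: "x = (j,a)" by fastforce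
  obtain k b where z: "z = (k,b)" by fastforce
  show "Ft (D n) (F n n) m m' (\<lambda>x y. f x y + g x y) x z = Ft (D n) (F n n) m m' f x z + Ft (D n) (F n n) m m' g x z"
  proof (cases "j \<in> J m' \<and> k \<in> J m")
    case True
    have "cp m' (p m' j) (cp m (\<lambda>x y. f x y + g x y) (ii m k)) =
       (\<lambda>x y. cp m' (p m' j) (cp m f (ii m k)) x y + cp m' (p m' j) (cp m g (ii m k)) x y)"
      by (simp add: mm_add_left mm_add_right)
    thus ?thesis using True lfun_add[OF G(1) G(2) G(2) XC[OF m _ _ f] XC[OF m _ _ g]]
      by (simp add: x z Ft_def)
  next
    case False thus ?thesis by (auto simp: x z Ft_def)
  qed
qed

lemma Ft_scal:
  assumes G: "lfun Ob D F" "n \<in> Ob" and m: "1 \<le> m" "1 \<le> m'" and f: "f \<in> C m m'"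
  shows "Ft (D n) (F n n) m m' (\<lambda>x y. c * f x y) = (\<lambda>x y. c * Ft (D n) (F n n) m m' f x y)"
proof (intro ext)
  fix x z :: "'j \<times> nat"
  obtain j a where x: "x = (j,a)" by fastforce
  obtain k b where z: "z = (k,b)" by fastforce
  show "Ft (D n) (F n n) m m' (\<lambda>x y. c * f x y) x z = c * Ft (D n) (F n n) m m' f x z"
  proof (cases "j \<in> J m' \<and> k \<in> J m")
    case True
    have "cp m' (p m' j) (cp m (\<lambda>x y. c * f x y) (ii m k)) = (\<lambda>x y. c * cp m' (p m' j) (cp m f (ii m k)) x y)"
      by (simp add: mm_scal_left mm_scal_right)
    thus ?thesis using True lfun_scal[OF G(1) G(2) G(2) XC[OF m _ _ f]]
      by (simp add: x z Ft_def)
  next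
    case False thus ?thesis by (auto simp: x z Ft_def)
  qed
qed

end


lemma mm_absorb: "mm J A B = E \<Longrightarrow> finite J \<Longrightarrow> finite K \<Longrightarrow> mm J A (mm K B X) = mm K E X"
  using mm_assoc[of J K A B X] by simp

context morita
begin

definition Em :: "nat \<Rightarrow> ('k tmat \<Rightarrow> 'k nmat) \<Rightarrow> nat \<Rightarrow> ('j \<times> nat) \<Rightarrow> ('j \<times> nat) \<Rightarrow> 'k" where
  "Em N \<rho> m = Ft N \<rho> m m (tid d m)"

definition facP :: "nat \<Rightarrow> ('k tmat \<Rightarrow> 'k nmat) \<Rightarrow> nat \<Rightarrow> nat \<times> (('j \<times> nat) \<Rightarrow> nat \<Rightarrow> 'k) \<times> (nat \<Rightarrow> ('j \<times> nat) \<Rightarrow> 'k) \<Rightarrow> bool" where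
  "facP N \<rho> m t \<longleftrightarrow> (case t of (r, A, B) \<Rightarrow> supp_in (Ix N m) {..<r} A \<and> supp_in {..<r} (Ix N m) B \<and>
      mm {..<r} A B = Em N \<rho> m \<and> mm (Ix N m) B A = idm {..<r})"

definition fac where "fac N \<rho> m = (SOME t. facP N \<rho> m t)"
definition rk where "rk N \<rho> m = fst (fac N \<rho> m)"
definition Af where "Af N \<rho> m = fst (snd (fac N \<rho> m))"
definition Bf where "Bf N \<rho> m = snd (snd (fac N \<rho> m))"

lemma tid_C: "tid d m \<in> C m m" by (rule CHom_tid)

lemma Em_supp: assumes G: "lfun Ob D F" "n \<in> Ob" and m: "1 \<le> m"
  shows "supp_in (Ix (D n) m) (Ix (D n) m) (Em (D n) (F n n) m)"
  unfolding Em_def by (rule Ft_supp[OF G m m tid_C])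

lemma Ft_E_right: assumes G: "lfun Ob D F" "n \<in> Ob" and m: "1 \<le> m" "1 \<le> m'" and f: "f \<in> C m m'"
  shows "mm (Ix (D n) m) (Ft (D n) (F n n) m m' f) (Em (D n) (F n n) m) = Ft (D n) (F n n) m m' f"
  unfolding Em_def using FtA[OF G m(1) m(1) m(2) tid_C f] tid_right[OF f] by simp

lemma Ft_E_left: assumes G: "lfun Ob D F" "n \<in> Ob" and m: "1 \<le> m" "1 \<le> m'" and f: "f \<in> C m m'"
  shows "mm (Ix (D n) m') (Em (D n) (F n n) m') (Ft (D n) (F n n) m m' f) = Ft (D n) (F n n) m m' f"
  unfolding Em_def using FtA[OF G m(1) m(2) m(2) f tid_C] tid_left[OF f] by simp

lemma Em_idem: assumes G: "lfun Ob D F" "n \<in> Ob" and m: "1 \<le> m"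
  shows "mm (Ix (D n) m) (Em (D n) (F n n) m) (Em (D n) (F n n) m) = Em (D n) (F n n) m"
  using Ft_E_right[OF G m m tid_C] by (simp add: Em_def)

lemma fac_spec: assumes G: "lfun Ob D F" "n \<in> Ob" and m: "1 \<le> m"
  shows "supp_in (Ix (D n) m) {..<rk (D n) (F n n) m} (Af (D n) (F n n) m)"
    "supp_in {..<rk (D n) (F n n) m} (Ix (D n) m) (Bf (D n) (F n n) m)"
    "mm {..<rk (D n) (F n n) m} (Af (D n) (F n n) m) (Bf (D n) (F n n) m) = Em (D n) (F n n) m"
    "mm (Ix (D n) m) (Bf (D n) (F n n) m) (Af (D n) (F n n) m) = idm {..<rk (D n) (F n n) m}"
proof -
  from idem_factor[OF finite_Ix Em_supp[OF G m] Em_idem[OF G m]]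
  obtain r :: nat and A B where "supp_in (Ix (D n) m) {..<r} A \<and> supp_in {..<r} (Ix (D n) m) B \<and>
      mm {..<r} A B = Em (D n) (F n n) m \<and> mm (Ix (D n) m) B A = idm {..<r}" by blast
  hence "facP (D n) (F n n) m (r, A, B)" by (simp add: facP_def)
  hence "facP (D n) (F n n) m (fac (D n) (F n n) m)" unfolding fac_def by (rule someI)
  thus "supp_in (Ix (D n) m) {..<rk (D n) (F n n) m} (Af (D n) (F n n) m)"
    "supp_in {..<rk (D n) (F n n) m} (Ix (D n) m) (Bf (D n) (F n n) m)"
    "mm {..<rk (D n) (F n n) m} (Af (D n) (F n n) m) (Bf (D n) (F n n) m) = Em (D n) (F n n) m"
    "mm (Ix (D n) m) (Bf (D n) (F n n) m) (Af (D n) (F n n) m) = idm {..<rk (D n) (F n n) m}"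
    by (auto simp: facP_def rk_def Af_def Bf_def split: prod.splits)
qed

lemma EA: assumes G: "lfun Ob D F" "n \<in> Ob" and m: "1 \<le> m"
  shows "mm (Ix (D n) m) (Em (D n) (F n n) m) (Af (D n) (F n n) m) = Af (D n) (F n n) m"
proof -
  note fs = fac_spec[OF G m]
  have "mm (Ix (D n) m) (Em (D n) (F n n) m) (Af (D n) (F n n) m) =
     mm {..<rk (D n) (F n n) m} (Af (D n) (F n n) m) (mm (Ix (D n) m) (Bf (D n) (F n n) m) (Af (D n) (F n n) m))"
    by (simp add: fs(3)[symmetric] mm_assoc finite_Ix)
  also have "\<dots> = Af (D n) (F n n) m" using fs(4) mm_idm_right[OF finite_lessThan fs(1)] by simp
  finally show ?thesis .
qed

lemma BE: assumes G: "lfun Ob D F" "n \<in> Ob" and m: "1 \<le> m"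
  shows "mm (Ix (D n) m) (Bf (D n) (F n n) m) (Em (D n) (F n n) m) = Bf (D n) (F n n) m"
proof -
  note fs = fac_spec[OF G m]
  have "mm (Ix (D n) m) (Bf (D n) (F n n) m) (Em (D n) (F n n) m) =
     mm {..<rk (D n) (F n n) m} (mm (Ix (D n) m) (Bf (D n) (F n n) m) (Af (D n) (F n n) m)) (Bf (D n) (F n n) m)"
    by (simp add: fs(3)[symmetric] mm_assoc finite_Ix)
  also have "\<dots> = Bf (D n) (F n n) m" using fs(4) mm_idm_left[OF finite_lessThan fs(2)] by simp
  finally show ?thesis .
qed

definition PsiF :: "nat \<Rightarrow> ('k tmat \<Rightarrow> 'k nmat) \<Rightarrow> nat \<Rightarrow> nat \<Rightarrow> 'k tmat \<Rightarrow> 'k nmat" where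
  "PsiF N \<rho> m m' f = mm (Ix N m') (Bf N \<rho> m') (mm (Ix N m) (Ft N \<rho> m m' f) (Af N \<rho> m))"

lemma Psi_lfun: assumes G: "lfun Ob D F" "n \<in> Ob"
  shows "lfun {m. 1 \<le> m} (rk (D n) (F n n)) (PsiF (D n) (F n n))"
  unfolding lfun_def
proof (intro conjI ballI allI)
  fix a b :: nat and f :: "'k tmat" assume a: "a \<in> {m. 1 \<le> m}" and b: "b \<in> {m. 1 \<le> m}" and f: "f \<in> C a b"
  show "supp_in {..<rk (D n) (F n n) b} {..<rk (D n) (F n n) a} (PsiF (D n) (F n n) a b f)"
    unfolding PsiF_def using a b
    by (intro supp_mm[OF fac_spec(2)[OF G] supp_mm[OF Ft_supp[OF G _ _ f] fac_spec(1)[OF G]]]) auto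
  fix g c assume g: "g \<in> C a b"
  show "PsiF (D n) (F n n) a b (\<lambda>x y. f x y + g x y) = (\<lambda>i j. PsiF (D n) (F n n) a b f i j + PsiF (D n) (F n n) a b g i j)"
    using a b by (simp add: PsiF_def Ft_add[OF G _ _ f g] mm_add_left mm_add_right)
  show "PsiF (D n) (F n n) a b (\<lambda>x y. c * f x y) = (\<lambda>i j. c * PsiF (D n) (F n n) a b f i j)"
    using a b by (simp add: PsiF_def Ft_scal[OF G _ _ f] mm_scal_left mm_scal_right)
next
  fix a b c :: nat and f g :: "'k tmat" assume a: "a \<in> {m. 1 \<le> m}" and b: "b \<in> {m. 1 \<le> m}" and c: "c \<in> {m. 1 \<le> m}"
    and f: "f \<in> C a b" and g: "g \<in> C b c"
  have a1: "1 \<le> a" and b1: "1 \<le> b" and c1: "1 \<le> c" using a b c by auto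
  note fsb = fac_spec[OF G b1]
  show "PsiF (D n) (F n n) a c (cp b g f) = mm {..<rk (D n) (F n n) b} (PsiF (D n) (F n n) b c g) (PsiF (D n) (F n n) a b f)"
    by (simp add: PsiF_def mm_assoc finite_Ix mm_absorb[OF fsb(3)] mm_absorb[OF Ft_E_right[OF G b1 c1 g]]
        mm_absorb[OF FtA[OF G a1 b1 c1 f g]])
next
  fix a :: nat assume a: "a \<in> {m. 1 \<le> m}"
  hence a1: "1 \<le> a" by simp
  show "PsiF (D n) (F n n) a a (tid d a) = idm {..<rk (D n) (F n n) a}"
    by (simp add: PsiF_def Em_def[symmetric] EA[OF G a1] fac_spec(4)[OF G a1])
qed

definition eta :: "(nat \<Rightarrow> nat) \<Rightarrow> (nat \<Rightarrow> nat \<Rightarrow> 'k tmat \<Rightarrow> 'k nmat) \<Rightarrow> nat \<Rightarrow> 'k nmat" where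
  "eta D F m = mm (Ix (D n) m) (Rw F m m (tid d m)) (Af (D n) (F n n) m)"

definition etai :: "(nat \<Rightarrow> nat) \<Rightarrow> (nat \<Rightarrow> nat \<Rightarrow> 'k tmat \<Rightarrow> 'k nmat) \<Rightarrow> nat \<Rightarrow> 'k nmat" where
  "etai D F m = mm (Ix (D n) m) (Bf (D n) (F n n) m) (Cl F m m (tid d m))"

lemma cpt: "cp m (tid d m) (tid d m) = tid d m"
  by (rule tid_left[OF tid_C])

lemma eta_facts: assumes G: "lfun Ob D F" "n \<in> Ob" "m \<in> Ob" and m: "1 \<le> m"
  shows "mm (Ix (D n) m) (Em (D n) (F n n) m) (Cl F m m (tid d m)) = Cl F m m (tid d m)"
    "mm (Ix (D n) m) (Rw F m m (tid d m)) (Em (D n) (F n n) m) = Rw F m m (tid d m)"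
    "mm {..<D m} (Cl F m m (tid d m)) (Rw F m m (tid d m)) = Em (D n) (F n n) m"
    "mm (Ix (D n) m) (Rw F m m (tid d m)) (Cl F m m (tid d m)) = idm {..<D m}"
  using R2[OF G m m tid_C tid_C] R1[OF G m m tid_C tid_C] R3[OF G(1,2,3) m m tid_C tid_C]
    R4[OF G(1,2,3,3) m tid_C tid_C] lfun_id[OF G(1,3)]
  by (simp_all add: cpt Em_def)

lemma eta_supp: assumes G: "lfun Ob D F" "n \<in> Ob" "m \<in> Ob" and m: "1 \<le> m"
  shows "supp_in {..<D m} {..<rk (D n) (F n n) m} (eta D F m)"
  unfolding eta_def by (rule supp_mm[OF Rw_supp[OF G m tid_C] fac_spec(1)[OF G(1,2) m]])

lemma etai_supp: assumes G: "lfun Ob D F" "n \<in> Ob" "m \<in> Ob" and m: "1 \<le> m"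
  shows "supp_in {..<rk (D n) (F n n) m} {..<D m} (etai D F m)"
  unfolding etai_def by (rule supp_mm[OF fac_spec(2)[OF G(1,2) m] Cl_supp[OF G m tid_C]])

lemma eta_I1: assumes G: "lfun Ob D F" "n \<in> Ob" "m \<in> Ob" and m: "1 \<le> m"
  shows "mm {..<rk (D n) (F n n) m} (eta D F m) (etai D F m) = idm {..<D m}"
  using eta_facts[OF G m] fac_spec[OF G(1,2) m]
  by (simp add: eta_def etai_def mm_assoc finite_Ix mm_absorb[OF fac_spec(3)[OF G(1,2) m]])

lemma eta_I2: assumes G: "lfun Ob D F" "n \<in> Ob" "m \<in> Ob" and m: "1 \<le> m"
  shows "mm {..<D m} (etai D F m) (eta D F m) = idm {..<rk (D n) (F n n) m}"
  using eta_facts[OF G m] fac_spec[OF G(1,2) m] EA[OF G(1,2) m]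
  by (simp add: eta_def etai_def mm_assoc finite_Ix mm_absorb[OF eta_facts(3)[OF G m]])

lemma eta_nat: assumes G: "lfun Ob D F" "n \<in> Ob" "m \<in> Ob" "m' \<in> Ob" and m: "1 \<le> m" "1 \<le> m'"
    and f: "f \<in> C m m'"
  shows "mm {..<rk (D n) (F n n) m'} (eta D F m') (PsiF (D n) (F n n) m m' f) = mm {..<D m} (F m m' f) (eta D F m)"
proof -
  have R1f: "mm (Ix (D n) m') (Rw F m' m' (tid d m')) (Ft (D n) (F n n) m m' f) = Rw F m' m f"
    using R1[OF G(1,2,4) m(1,2) f tid_C] tid_left[OF f] by simp
  have R5f: "mm {..<D m} (F m m' f) (Rw F m m (tid d m)) = Rw F m' m f"
    using R5[OF G(1,2,3,4) m(1) f tid_C] tid_right[OF f] by simp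
  show ?thesis
    by (simp add: eta_def PsiF_def mm_assoc finite_Ix mm_absorb[OF fac_spec(3)[OF G(1,2) m(2)]]
      mm_absorb[OF eta_facts(2)[OF G(1,2,4) m(2)]] mm_absorb[OF R1f] mm_absorb[OF R5f])
qed

lemma etai_nat: assumes G: "lfun Ob D F" "n \<in> Ob" "m \<in> Ob" "m' \<in> Ob" and m: "1 \<le> m" "1 \<le> m'"
    and f: "f \<in> C m m'"
  shows "mm {..<rk (D n) (F n n) m} (PsiF (D n) (F n n) m m' f) (etai D F m) = mm {..<D m'} (etai D F m') (F m m' f)"
proof -
  have R2f: "mm (Ix (D n) m) (Ft (D n) (F n n) m m' f) (Cl F m m (tid d m)) = Cl F m' m f"
    using R2[OF G(1,2,3) m(1,2) f tid_C] tid_right[OF f] by simp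
  have R6f: "mm {..<D m'} (Cl F m' m' (tid d m')) (F m m' f) = Cl F m' m f"
    using R6[OF G(1,2,4,3) m(2) tid_C f] tid_left[OF f] by simp
  show ?thesis
    by (simp add: etai_def PsiF_def mm_assoc finite_Ix mm_absorb[OF fac_spec(3)[OF G(1,2) m(1)]]
      mm_absorb[OF eta_facts(1)[OF G(1,2,3) m(1)]] eta_facts(1)[OF G(1,2,3) m(1)] R2f R6f)
qed

definition PsiA :: "nat \<Rightarrow> ('k tmat \<Rightarrow> 'k nmat) \<Rightarrow> nat \<Rightarrow> ('k tmat \<Rightarrow> 'k nmat) \<Rightarrow> 'k nmat \<Rightarrow> nat \<Rightarrow> 'k nmat" where
  "PsiA N \<rho> N' \<rho>' \<phi> m = (if 1 \<le> m then mm (Ix N' m) (Bf N' \<rho>' m) (mm (Ix N m) (Dg m \<phi>) (Af N \<rho> m)) else (\<lambda>i j. 0))"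

lemma PsiA_supp: assumes G: "lfun Ob D F" "lfun Ob D' F'" "n \<in> Ob" and th: "ntr Ob D F D' F' \<theta>"
  shows "supp_in {..<rk (D' n) (F' n n) m} {..<rk (D n) (F n n) m} (PsiA (D n) (F n n) (D' n) (F' n n) (\<theta> n) m)"
proof (cases "1 \<le> m")
  case True
  thus ?thesis unfolding PsiA_def
    by (simp add: supp_mm[OF fac_spec(2)[OF G(2,3) True] supp_mm[OF Dg_supp[OF ntr_supp[OF th G(3)]] fac_spec(1)[OF G(1,3) True]]])
next
  case False thus ?thesis by (simp add: PsiA_def supp_in_def)
qed

lemma PsiA_nat: assumes G: "lfun Ob D F" "lfun Ob D' F'" "n \<in> Ob" and th: "ntr Ob D F D' F' \<theta>"
    and m: "1 \<le> m" "1 \<le> m'" and f: "f \<in> C m m'"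
  shows "mm {..<rk (D n) (F n n) m'} (PsiA (D n) (F n n) (D' n) (F' n n) (\<theta> n) m') (PsiF (D n) (F n n) m m' f)
       = mm {..<rk (D' n) (F' n n) m} (PsiF (D' n) (F' n n) m m' f) (PsiA (D n) (F n n) (D' n) (F' n n) (\<theta> n) m)"
  using m
  by (simp add: PsiA_def PsiF_def mm_assoc finite_Ix mm_absorb[OF fac_spec(3)[OF G(1,3) m(2)]]
      mm_absorb[OF fac_spec(3)[OF G(2,3) m(1)]] mm_absorb[OF Ft_E_left[OF G(1,3) m f]]
      mm_absorb[OF Ft_E_right[OF G(2,3) m f]] mm_absorb[OF Dg1[OF G th m f]])

lemma PsiA_id: assumes G: "lfun Ob D F" "n \<in> Ob" and m: "1 \<le> m"
  shows "PsiA (D n) (F n n) (D n) (F n n) (idm {..<D n}) m = idm {..<rk (D n) (F n n) m}"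
  using m fac_spec[OF G m]
  by (simp add: PsiA_def Dg_id mm_idm_left[OF finite_Ix fac_spec(1)[OF G m]])

lemma PsiA_comp: assumes G: "lfun Ob D F" "lfun Ob D' F'" "lfun Ob D'' F''" "n \<in> Ob"
    and th: "ntr Ob D F D' F' \<theta>" and ps: "ntr Ob D' F' D'' F'' \<psi>" and m: "1 \<le> m"
  shows "mm {..<rk (D' n) (F' n n) m} (PsiA (D' n) (F' n n) (D'' n) (F'' n n) (\<psi> n) m) (PsiA (D n) (F n n) (D' n) (F' n n) (\<theta> n) m)
     = PsiA (D n) (F n n) (D'' n) (F'' n n) (mm {..<D' n} (\<psi> n) (\<theta> n)) m"
proof -
  have DE: "mm (Ix (D' n) m) (Em (D' n) (F' n n) m) (Dg m (\<theta> n)) = mm (Ix (D n) m) (Dg m (\<theta> n)) (Em (D n) (F n n) m)"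
    using Dg1[OF G(1,2,4) th m m tid_C] by (simp add: Em_def)
  show ?thesis
    using m
    by (simp add: PsiA_def mm_assoc finite_Ix mm_absorb[OF fac_spec(3)[OF G(2,4) m]]
      mm_absorb[OF DE] EA[OF G(1,4) m] mm_absorb[OF Dg_mult])
qed

lemma eta_natural: assumes G: "lfun Ob D F" "lfun Ob D' F'" "n \<in> Ob" "m \<in> Ob" and th: "ntr Ob D F D' F' \<theta>"
    and m: "1 \<le> m"
  shows "mm {..<rk (D' n) (F' n n) m} (eta D' F' m) (PsiA (D n) (F n n) (D' n) (F' n n) (\<theta> n) m) = mm {..<D m} (\<theta> m) (eta D F m)"
  using m
  by (simp add: eta_def PsiA_def mm_assoc finite_Ix mm_absorb[OF fac_spec(3)[OF G(2,3) m]]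
      mm_absorb[OF eta_facts(2)[OF G(2,3,4) m]] mm_absorb[OF Dg4[OF G(1,2,3,4) th m tid_C]])

end


context morita
begin

lemma linf_iff: "is_linfunctor d Q q (D, F) \<longleftrightarrow> lfun {m. 1 \<le> m} D F"
  unfolding is_linfunctor_def lfun_def nmat_in_supp tmul_mm nmul_mm nid_idm by auto

lemma smod_iff: "is_Smodule d Q q n (N, \<rho>) \<longleftrightarrow> lfun {n} (\<lambda>_. N) (\<lambda>_ _. \<rho>)"
  unfolding is_Smodule_def lfun_def nmat_in_supp tmul_mm nmul_mm nid_idm by auto

lemma nattrans_iff: "is_nattrans d Q q (D, F) (D', F') \<theta> \<longleftrightarrow> ntr {m. 1 \<le> m} D F D' F' \<theta> \<and> \<theta> 0 = (\<lambda>i j. 0)"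
  unfolding is_nattrans_def ntr_def nmat_in_supp nmul_mm by auto

lemma smodhom_iff: "is_Smodhom d Q q n (N, \<rho>) (N', \<rho>') \<phi> \<longleftrightarrow> ntr {n} (\<lambda>_. N) (\<lambda>_ _. \<rho>) (\<lambda>_. N') (\<lambda>_ _. \<rho>') (\<lambda>_. \<phi>)"
  unfolding is_Smodhom_def ntr_def nmat_in_supp nmul_mm by auto

lemma lfun_single: "lfun Ob D F \<Longrightarrow> n \<in> Ob \<Longrightarrow> lfun {n} (\<lambda>_. D n) (\<lambda>_ _. F n n)"
  unfolding lfun_def by auto

lemma ntr_single: "ntr Ob D F D' F' \<theta> \<Longrightarrow> n \<in> Ob \<Longrightarrow> ntr {n} (\<lambda>_. D n) (\<lambda>_ _. F n n) (\<lambda>_. D' n) (\<lambda>_ _. F' n n) (\<lambda>_. \<theta> n)"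
  unfolding ntr_def by auto

lemma n_in: "n \<in> {m. 1 \<le> m}" using n1 by simp

definition "FoP X = (fst X n, snd X n n)"
definition "FaP (X::'k Pobj) (Y::'k Pobj) (\<theta>::nat \<Rightarrow> 'k nmat) = \<theta> n"
definition "GoP M = (rk (fst M) (snd M), PsiF (fst M) (snd M))"
definition "GaP M M' \<phi> = PsiA (fst M) (snd M) (fst M') (snd M') \<phi>"
definition "etaP X = (\<lambda>m. if 1 \<le> m then eta (fst X) (snd X) m else (\<lambda>i j. 0))"
definition "etaPi X = (\<lambda>m. if 1 \<le> m then etai (fst X) (snd X) m else (\<lambda>i j. 0))"
definition "epsM M = eta (\<lambda>_. fst M) (\<lambda>_ _. snd M) n"
definition "epsMi M = etai (\<lambda>_. fst M) (\<lambda>_ _. snd M) n"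

lemma Pobj: "X \<in> obj (Pcat d Q q) \<longleftrightarrow> lfun {m. 1 \<le> m} (fst X) (snd X)"
  by (cases X) (simp add: Pcat_def linf_iff)

lemma Phom: "\<theta> \<in> hom (Pcat d Q q) X Y \<longleftrightarrow> ntr {m. 1 \<le> m} (fst X) (snd X) (fst Y) (snd Y) \<theta> \<and> \<theta> 0 = (\<lambda>i j. 0)"
  by (cases X, cases Y) (simp add: Pcat_def nattrans_iff)

lemma Mobj: "M \<in> obj (Smod_cat d Q q n) \<longleftrightarrow> lfun {n} (\<lambda>_. fst M) (\<lambda>_ _. snd M)"
  by (cases M) (simp add: Smod_cat_def smod_iff)

lemma Mhom: "\<phi> \<in> hom (Smod_cat d Q q n) M M' \<longleftrightarrow> ntr {n} (\<lambda>_. fst M) (\<lambda>_ _. snd M) (\<lambda>_. fst M') (\<lambda>_ _. snd M') (\<lambda>_. \<phi>)"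
  by (cases M, cases M') (simp add: Smod_cat_def smodhom_iff)

lemma Phi_functor: "is_functor (Pcat d Q q) (Smod_cat d Q q n) FoP FaP"
  unfolding is_functor_def
proof (intro conjI ballI)
  fix X assume "X \<in> obj (Pcat d Q q)"
  thus "FoP X \<in> obj (Smod_cat d Q q n)"
    by (simp add: Pobj Mobj FoP_def lfun_single[OF _ n_in])
next
  fix X Y \<theta> assume "X \<in> obj (Pcat d Q q)" "Y \<in> obj (Pcat d Q q)" "\<theta> \<in> hom (Pcat d Q q) X Y"
  thus "FaP X Y \<theta> \<in> hom (Smod_cat d Q q n) (FoP X) (FoP Y)"
    by (simp add: Phom Mhom FoP_def FaP_def ntr_single[OF _ n_in])
next
  fix X Y Z :: "'k Pobj" and f g
  show "FaP X Z (comp (Pcat d Q q) X Y Z g f) = comp (Smod_cat d Q q n) (FoP X) (FoP Y) (FoP Z) (FaP Y Z g) (FaP X Y f)"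
    by (simp add: Pcat_def Smod_cat_def FoP_def FaP_def)
next
  fix X
  show "FaP X X (idn (Pcat d Q q) X) = idn (Smod_cat d Q q n) (FoP X)"
    using n1 by (simp add: Pcat_def Smod_cat_def FoP_def FaP_def)
qed

lemma Psi_functor: "is_functor (Smod_cat d Q q n) (Pcat d Q q) GoP GaP"
  unfolding is_functor_def
proof (intro conjI ballI)
  fix M assume "M \<in> obj (Smod_cat d Q q n)"
  hence G: "lfun {n} (\<lambda>_. fst M) (\<lambda>_ _. snd M)" by (simp add: Mobj)
  show "GoP M \<in> obj (Pcat d Q q)"
    using Psi_lfun[OF G] by (simp add: Pobj GoP_def)
next
  fix M M' \<phi> assume M: "M \<in> obj (Smod_cat d Q q n)" and M': "M' \<in> obj (Smod_cat d Q q n)"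
    and ph: "\<phi> \<in> hom (Smod_cat d Q q n) M M'"
  have G: "lfun {n} (\<lambda>_. fst M) (\<lambda>_ _. snd M)" using M by (simp add: Mobj)
  have G': "lfun {n} (\<lambda>_. fst M') (\<lambda>_ _. snd M')" using M' by (simp add: Mobj)
  have th: "ntr {n} (\<lambda>_. fst M) (\<lambda>_ _. snd M) (\<lambda>_. fst M') (\<lambda>_ _. snd M') (\<lambda>_. \<phi>)" using ph by (simp add: Mhom)
  show "GaP M M' \<phi> \<in> hom (Pcat d Q q) (GoP M) (GoP M')"
    unfolding Phom
  proof (intro conjI)
    show "GaP M M' \<phi> 0 = (\<lambda>i j. 0)" by (simp add: GaP_def PsiA_def)
    show "ntr {m. 1 \<le> m} (fst (GoP M)) (snd (GoP M)) (fst (GoP M')) (snd (GoP M')) (GaP M M' \<phi>)"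
      unfolding ntr_def
    proof (intro conjI ballI)
      fix m :: nat assume "m \<in> {m. 1 \<le> m}"
      show "supp_in {..<fst (GoP M') m} {..<fst (GoP M) m} (GaP M M' \<phi> m)"
        using PsiA_supp[OF G G' _ th] by (simp add: GoP_def GaP_def)
    next
      fix m m' :: nat and f assume "m \<in> {m. 1 \<le> m}" "m' \<in> {m. 1 \<le> m}" "f \<in> C m m'"
      thus "mm {..<fst (GoP M) m'} (GaP M M' \<phi> m') (snd (GoP M) m m' f) = mm {..<fst (GoP M') m} (snd (GoP M') m m' f) (GaP M M' \<phi> m)"
        using PsiA_nat[OF G G' _ th] by (simp add: GoP_def GaP_def)
    qed
  qed
next
  fix M M' M'' \<phi> \<psi> assume M: "M \<in> obj (Smod_cat d Q q n)" and M': "M' \<in> obj (Smod_cat d Q q n)"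
    and M'': "M'' \<in> obj (Smod_cat d Q q n)"
    and ph: "\<phi> \<in> hom (Smod_cat d Q q n) M M'" and ps: "\<psi> \<in> hom (Smod_cat d Q q n) M' M''"
  have G: "lfun {n} (\<lambda>_. fst M) (\<lambda>_ _. snd M)" using M by (simp add: Mobj)
  have G': "lfun {n} (\<lambda>_. fst M') (\<lambda>_ _. snd M')" using M' by (simp add: Mobj)
  have G'': "lfun {n} (\<lambda>_. fst M'') (\<lambda>_ _. snd M'')" using M'' by (simp add: Mobj)
  have th: "ntr {n} (\<lambda>_. fst M) (\<lambda>_ _. snd M) (\<lambda>_. fst M') (\<lambda>_ _. snd M') (\<lambda>_. \<phi>)" using ph by (simp add: Mhom)
  have th2: "ntr {n} (\<lambda>_. fst M') (\<lambda>_ _. snd M') (\<lambda>_. fst M'') (\<lambda>_ _. snd M'') (\<lambda>_. \<psi>)" using ps by (simp add: Mhom)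
  show "GaP M M'' (comp (Smod_cat d Q q n) M M' M'' \<psi> \<phi>) = comp (Pcat d Q q) (GoP M) (GoP M') (GoP M'') (GaP M' M'' \<psi>) (GaP M M' \<phi>)"
  proof (intro ext)
    fix m i j :: nat
    show "GaP M M'' (comp (Smod_cat d Q q n) M M' M'' \<psi> \<phi>) m i j = comp (Pcat d Q q) (GoP M) (GoP M') (GoP M'') (GaP M' M'' \<psi>) (GaP M M' \<phi>) m i j"
    proof (cases "1 \<le> m")
      case True
      show ?thesis using PsiA_comp[OF G G' G'' _ th th2 True]
        by (simp add: Smod_cat_def Pcat_def GoP_def GaP_def nmul_mm)
    next
      case False
      thus ?thesis by (simp add: Smod_cat_def Pcat_def GoP_def GaP_def nmul_mm PsiA_def mm_def)
    qed
  qed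
next
  fix M assume M: "M \<in> obj (Smod_cat d Q q n)"
  have G: "lfun {n} (\<lambda>_. fst M) (\<lambda>_ _. snd M)" using M by (simp add: Mobj)
  show "GaP M M (idn (Smod_cat d Q q n) M) = idn (Pcat d Q q) (GoP M)"
  proof (intro ext)
    fix m i j :: nat
    show "GaP M M (idn (Smod_cat d Q q n) M) m i j = idn (Pcat d Q q) (GoP M) m i j"
      using PsiA_id[OF G, of m]
      by (cases "1 \<le> m") (simp_all add: Smod_cat_def Pcat_def GoP_def GaP_def nid_idm PsiA_def)
  qed
qed

lemma etaP_iso: "is_nat_iso (Pcat d Q q) (Pcat d Q q) (\<lambda>a. GoP (FoP a)) (\<lambda>a b f. GaP (FoP a) (FoP b) (FaP a b f))
    (\<lambda>a. a) (\<lambda>a b f. f) etaP"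
  unfolding is_nat_iso_def
proof (intro conjI ballI)
  fix X assume X: "X \<in> obj (Pcat d Q q)"
  have G: "lfun {m. 1 \<le> m} (fst X) (snd X)" using X by (simp add: Pobj)
  have u: "etaP X \<in> hom (Pcat d Q q) (GoP (FoP X)) X"
    unfolding Phom ntr_def
  proof (intro conjI ballI)
    fix m :: nat assume m: "m \<in> {m. 1 \<le> m}"
    thus "supp_in {..<fst X m} {..<fst (GoP (FoP X)) m} (etaP X m)"
      using eta_supp[OF G n_in m] by (simp add: etaP_def GoP_def FoP_def)
  next
    fix m m' :: nat and f assume m: "m \<in> {m. 1 \<le> m}" and m': "m' \<in> {m. 1 \<le> m}" and f: "f \<in> C m m'"
    thus "mm {..<fst (GoP (FoP X)) m'} (etaP X m') (snd (GoP (FoP X)) m m' f) = mm {..<fst X m} (snd X m m' f) (etaP X m)"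
      using eta_nat[OF G n_in m m' _ _ f] by (simp add: etaP_def GoP_def FoP_def)
  qed (simp add: etaP_def)
  have v: "etaPi X \<in> hom (Pcat d Q q) X (GoP (FoP X))"
    unfolding Phom ntr_def
  proof (intro conjI ballI)
    fix m :: nat assume m: "m \<in> {m. 1 \<le> m}"
    thus "supp_in {..<fst (GoP (FoP X)) m} {..<fst X m} (etaPi X m)"
      using etai_supp[OF G n_in m] by (simp add: etaPi_def GoP_def FoP_def)
  next
    fix m m' :: nat and f assume m: "m \<in> {m. 1 \<le> m}" and m': "m' \<in> {m. 1 \<le> m}" and f: "f \<in> C m m'"
    thus "mm {..<fst X m'} (etaPi X m') (snd X m m' f) = mm {..<fst (GoP (FoP X)) m} (snd (GoP (FoP X)) m m' f) (etaPi X m)"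
      using etai_nat[OF G n_in m m' _ _ f] by (simp add: etaPi_def GoP_def FoP_def)
  qed (simp add: etaPi_def)
  have c1: "comp (Pcat d Q q) (GoP (FoP X)) X (GoP (FoP X)) (etaPi X) (etaP X) = idn (Pcat d Q q) (GoP (FoP X))"
  proof (intro ext)
    fix m i j :: nat
    show "comp (Pcat d Q q) (GoP (FoP X)) X (GoP (FoP X)) (etaPi X) (etaP X) m i j = idn (Pcat d Q q) (GoP (FoP X)) m i j"
      using eta_I2[OF G n_in, of m]
      by (cases "1 \<le> m") (simp_all add: Pcat_def etaP_def etaPi_def GoP_def FoP_def nmul_mm nid_idm mm_def)
  qed
  have c2: "comp (Pcat d Q q) X (GoP (FoP X)) X (etaP X) (etaPi X) = idn (Pcat d Q q) X"
  proof (intro ext)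
    fix m i j :: nat
    show "comp (Pcat d Q q) X (GoP (FoP X)) X (etaP X) (etaPi X) m i j = idn (Pcat d Q q) X m i j"
      using eta_I1[OF G n_in, of m]
      by (cases "1 \<le> m") (simp_all add: Pcat_def etaP_def etaPi_def GoP_def FoP_def nmul_mm nid_idm mm_def)
  qed
  show "is_iso (Pcat d Q q) (GoP (FoP X)) X (etaP X)"
    unfolding is_iso_def using u v c1 c2 by blast
next
  fix X Y \<theta> assume X: "X \<in> obj (Pcat d Q q)" and Y: "Y \<in> obj (Pcat d Q q)" and th: "\<theta> \<in> hom (Pcat d Q q) X Y"
  have G: "lfun {m. 1 \<le> m} (fst X) (snd X)" using X by (simp add: Pobj)
  have G': "lfun {m. 1 \<le> m} (fst Y) (snd Y)" using Y by (simp add: Pobj)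
  have t: "ntr {m. 1 \<le> m} (fst X) (snd X) (fst Y) (snd Y) \<theta>" and t0: "\<theta> 0 = (\<lambda>i j. 0)"
    using th by (simp_all add: Phom)
  show "comp (Pcat d Q q) (GoP (FoP X)) (GoP (FoP Y)) Y (etaP Y) (GaP (FoP X) (FoP Y) (FaP X Y \<theta>)) =
        comp (Pcat d Q q) (GoP (FoP X)) X Y \<theta> (etaP X)"
  proof (intro ext)
    fix m i j :: nat
    show "comp (Pcat d Q q) (GoP (FoP X)) (GoP (FoP Y)) Y (etaP Y) (GaP (FoP X) (FoP Y) (FaP X Y \<theta>)) m i j =
        comp (Pcat d Q q) (GoP (FoP X)) X Y \<theta> (etaP X) m i j"
      using eta_natural[OF G G' n_in _ t, of m] t0
      by (cases "1 \<le> m") (simp_all add: Pcat_def etaP_def GoP_def FoP_def FaP_def GaP_def nmul_mm mm_def)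
  qed
qed

lemma epsM_iso: "is_nat_iso (Smod_cat d Q q n) (Smod_cat d Q q n) (\<lambda>x. FoP (GoP x)) (\<lambda>x y g. FaP (GoP x) (GoP y) (GaP x y g))
    (\<lambda>x. x) (\<lambda>x y g. g) epsM"
  unfolding is_nat_iso_def
proof (intro conjI ballI)
  have nn: "n \<in> {n}" by simp
  fix M assume M: "M \<in> obj (Smod_cat d Q q n)"
  have G: "lfun {n} (\<lambda>_. fst M) (\<lambda>_ _. snd M)" using M by (simp add: Mobj)
  have u: "epsM M \<in> hom (Smod_cat d Q q n) (FoP (GoP M)) M"
    unfolding Mhom ntr_def
    using eta_supp[OF G nn nn n1] eta_nat[OF G nn nn nn n1 n1]
    by (simp add: epsM_def GoP_def FoP_def)
  have v: "epsMi M \<in> hom (Smod_cat d Q q n) M (FoP (GoP M))"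
    unfolding Mhom ntr_def
    using etai_supp[OF G nn nn n1] etai_nat[OF G nn nn nn n1 n1]
    by (simp add: epsMi_def GoP_def FoP_def)
  have c1: "comp (Smod_cat d Q q n) (FoP (GoP M)) M (FoP (GoP M)) (epsMi M) (epsM M) = idn (Smod_cat d Q q n) (FoP (GoP M))"
    using eta_I2[OF G nn nn n1] by (simp add: Smod_cat_def epsM_def epsMi_def GoP_def FoP_def nmul_mm nid_idm)
  have c2: "comp (Smod_cat d Q q n) M (FoP (GoP M)) M (epsM M) (epsMi M) = idn (Smod_cat d Q q n) M"
    using eta_I1[OF G nn nn n1] by (simp add: Smod_cat_def epsM_def epsMi_def GoP_def FoP_def nmul_mm nid_idm)
  show "is_iso (Smod_cat d Q q n) (FoP (GoP M)) M (epsM M)"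
    unfolding is_iso_def using u v c1 c2 by blast
next
  have nn: "n \<in> {n}" by simp
  fix M M' \<phi> assume M: "M \<in> obj (Smod_cat d Q q n)" and M': "M' \<in> obj (Smod_cat d Q q n)"
    and ph: "\<phi> \<in> hom (Smod_cat d Q q n) M M'"
  have G: "lfun {n} (\<lambda>_. fst M) (\<lambda>_ _. snd M)" using M by (simp add: Mobj)
  have G': "lfun {n} (\<lambda>_. fst M') (\<lambda>_ _. snd M')" using M' by (simp add: Mobj)
  have th: "ntr {n} (\<lambda>_. fst M) (\<lambda>_ _. snd M) (\<lambda>_. fst M') (\<lambda>_ _. snd M') (\<lambda>_. \<phi>)" using ph by (simp add: Mhom)
  show "comp (Smod_cat d Q q n) (FoP (GoP M)) (FoP (GoP M')) M' (epsM M') (FaP (GoP M) (GoP M') (GaP M M' \<phi>)) =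
        comp (Smod_cat d Q q n) (FoP (GoP M)) M M' \<phi> (epsM M)"
    using eta_natural[OF G G' nn nn th n1]
    by (simp add: Smod_cat_def epsM_def GoP_def FoP_def FaP_def GaP_def nmul_mm)
qed

theorem morita_equiv: "cat_equivalent (Pcat d Q q) (Smod_cat d Q q n)"
  unfolding cat_equivalent_def
  using Phi_functor Psi_functor etaP_iso epsM_iso by blast

end


definition cnt :: "int set \<Rightarrow> int \<Rightarrow> nat" where
  "cnt S v = card {s\<in>S. 0 < s \<and> s \<le> \<bar>v\<bar>}"

definition sig :: "int set \<Rightarrow> int \<Rightarrow> int" where
  "sig S v = sgn v * (2 * int (cnt S v))"

lemma cnt_abs[simp]: "cnt S \<bar>v\<bar> = cnt S v" "cnt S (-v) = cnt S v"
  by (simp_all add: cnt_def)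

lemma cnt_mono: assumes "finite S" "\<bar>v\<bar> \<le> \<bar>w\<bar>" shows "cnt S v \<le> cnt S w"
  unfolding cnt_def
proof (rule card_mono)
  show "finite {s \<in> S. 0 < s \<and> s \<le> \<bar>w\<bar>}" using assms(1) by simp
  show "{s \<in> S. 0 < s \<and> s \<le> \<bar>v\<bar>} \<subseteq> {s \<in> S. 0 < s \<and> s \<le> \<bar>w\<bar>}"
    using assms(2) by (auto intro: order_trans)
qed

lemma cnt_strict: assumes "finite S" "\<bar>v\<bar> < \<bar>w\<bar>" "\<bar>w\<bar> \<in> S"
  shows "cnt S v < cnt S w"
  unfolding cnt_def
proof (rule psubset_card_mono)
  show "finite {s \<in> S. 0 < s \<and> s \<le> \<bar>w\<bar>}" using assms by simp
  have w0: "0 < \<bar>w\<bar>" using assms(2) by linarith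
  have "\<bar>w\<bar> \<in> {s \<in> S. 0 < s \<and> s \<le> \<bar>w\<bar>}" using assms(3) w0 by simp
  moreover have "\<bar>w\<bar> \<notin> {s \<in> S. 0 < s \<and> s \<le> \<bar>v\<bar>}" using assms(2) by simp
  moreover have "{s \<in> S. 0 < s \<and> s \<le> \<bar>v\<bar>} \<subseteq> {s \<in> S. 0 < s \<and> s \<le> \<bar>w\<bar>}"
    using assms(2) by (auto intro: order_trans)
  ultimately show "{s \<in> S. 0 < s \<and> s \<le> \<bar>v\<bar>} \<subset> {s \<in> S. 0 < s \<and> s \<le> \<bar>w\<bar>}" by blast
qed

lemma cnt_pos: assumes "finite S" "\<bar>v\<bar> \<in> S" "v \<noteq> 0" shows "0 < cnt S v"
proof -
  have "\<bar>v\<bar> \<in> {s\<in>S. 0 < s \<and> s \<le> \<bar>v\<bar>}" using assms by simp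
  hence "{s\<in>S. 0 < s \<and> s \<le> \<bar>v\<bar>} \<noteq> {}" by blast
  thus ?thesis using assms(1) by (simp add: cnt_def card_gt_0_iff)
qed

lemma cnt_le: "finite S \<Longrightarrow> cnt S v \<le> card S"
  unfolding cnt_def by (rule card_mono) (simp_all add: Collect_restrict)

lemma sig_neg: "sig S (-v) = - sig S v"
  by (simp add: sig_def sgn_minus)

lemma sig_abs: "\<bar>sig S v\<bar> = sig S \<bar>v\<bar>"
  by (simp add: sig_def abs_mult sgn_if)

lemma sig_zero[simp]: "sig S 0 = 0"
  by (simp add: sig_def)

lemma sig_abs_le: "finite S \<Longrightarrow> \<bar>sig S v\<bar> \<le> 2 * int (card S)"
  using cnt_le[of S v] by (auto simp: sig_def abs_mult sgn_if)

lemma sig_even: "even (sig S v)"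
  by (simp add: sig_def)

lemma sig_sign: assumes "finite S" "\<bar>v\<bar> \<in> S"
  shows "0 < sig S v \<longleftrightarrow> 0 < v" "sig S v = 0 \<longleftrightarrow> v = 0" "sig S v < 0 \<longleftrightarrow> v < 0"
  using cnt_pos[OF assms] by (auto simp: sig_def sgn_if zero_less_mult_iff mult_less_0_iff)

lemma sig_mono: assumes S: "finite S" and v: "\<bar>v\<bar> \<in> S" and w: "\<bar>w\<bar> \<in> S" and vw: "v < w"
  shows "sig S v < sig S w"
proof (cases "0 \<le> v")
  case True
  hence "\<bar>v\<bar> < \<bar>w\<bar>" using vw by auto
  hence "cnt S v < cnt S w" using cnt_strict[OF S _ w] by simp
  moreover have "0 < w" using True vw by simp
  ultimately show ?thesis using True by (auto simp: sig_def sgn_if)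
next
  case False
  show ?thesis
  proof (cases "0 \<le> w")
    case True
    have "sig S v < 0" using sig_sign(3)[OF S v] False by simp
    moreover have "0 \<le> sig S w" using sig_sign(1,2)[OF S w] True by linarith
    ultimately show ?thesis by simp
  next
    case False
    hence "\<bar>w\<bar> < \<bar>v\<bar>" using vw \<open>\<not> 0 \<le> v\<close> by auto
    hence "cnt S w < cnt S v" using cnt_strict[OF S _ v] by simp
    thus ?thesis using False \<open>\<not> 0 \<le> v\<close> by (auto simp: sig_def sgn_if)
  qed
qed

lemma sig_less_iff: assumes S: "finite S" and v: "\<bar>v\<bar> \<in> S" and w: "\<bar>w\<bar> \<in> S" shows "sig S v < sig S w \<longleftrightarrow> v < w"
proof
  assume h: "sig S v < sig S w"
  show "v < w"
  proof (rule ccontr)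
    assume "\<not> v < w" hence "w < v \<or> w = v" by auto
    thus False using sig_mono[OF S w v] h by auto
  qed
next
  assume "v < w" thus "sig S v < sig S w" by (rule sig_mono[OF S v w])
qed

lemma sig_eq_iff: assumes S: "finite S" and v: "\<bar>v\<bar> \<in> S" and w: "\<bar>w\<bar> \<in> S" shows "sig S v = sig S w \<longleftrightarrow> v = w"
proof
  assume h: "sig S v = sig S w"
  show "v = w"
  proof (rule ccontr)
    assume "v \<noteq> w" hence "w < v \<or> v < w" by auto
    thus False using sig_mono[OF S w v] sig_mono[OF S v w] h by auto
  qed
qed simp

lemma KQ_sig: assumes S: "finite S" and a: "\<bar>a\<bar> \<in> S" and i: "\<bar>i\<bar> \<in> S"
  shows "KQ Q (sig S a) (sig S i) = KQ Q a i"
proof -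
  have mi: "\<bar>-i\<bar> \<in> S" using i by simp
  have e1: "sig S a = - sig S i \<longleftrightarrow> a = - i" using sig_eq_iff[OF S a mi] by (simp add: sig_neg)
  have e2: "sig S a = sig S i \<longleftrightarrow> a = i" by (rule sig_eq_iff[OF S a i])
  show ?thesis unfolding KQ_def
    by (simp only: e1 e2 sig_sign[OF S a] sig_sign[OF S i])
qed

lemma Rq_sig: assumes S: "finite S" and a: "\<bar>a\<bar> \<in> S" and b: "\<bar>b\<bar> \<in> S" and i: "\<bar>i\<bar> \<in> S" and j: "\<bar>j\<bar> \<in> S"
  shows "Rq q (sig S a) (sig S b) (sig S i) (sig S j) = Rq q a b i j"
  unfolding Rq_def
  by (simp only: sig_eq_iff[OF S a i] sig_eq_iff[OF S a j] sig_eq_iff[OF S b i] sig_eq_iff[OF S b j]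
      sig_eq_iff[OF S i j] sig_less_iff[OF S i j])


lemma idx_abs: "v \<in> idx m \<longleftrightarrow> \<bar>v\<bar> \<in> idx m"
proof -
  have "even (v + int m - 1) \<longleftrightarrow> even (\<bar>v\<bar> + int m - 1)"
  proof (cases "0 \<le> v")
    case True thus ?thesis by simp
  next
    case False
    hence "\<bar>v\<bar> + int m - 1 = (v + int m - 1) + 2 * (- v)" by simp
    thus ?thesis by (metis dvd_add_left_iff dvd_triv_left)
  qed
  thus ?thesis by (simp add: idx_def)
qed

lemma map_sig_tup: assumes S: "finite S" and n: "n = 2 * r + 1" and c: "card S \<le> r" and y: "length y = d"
  shows "map (sig S) y \<in> tup d n"
proof -
  have "sig S v \<in> idx n" for v
  proof -
    have "\<bar>sig S v\<bar> \<le> 2 * int r" using sig_abs_le[OF S, of v] c by linarith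
    moreover have "even (sig S v + int n - 1)" using sig_even[of S v] n by simp
    ultimately show ?thesis using n by (simp add: idx_def)
  qed
  thus ?thesis using y by (auto simp: tup_def)
qed

lemma Rq_nz: "Rq q a b i j \<noteq> 0 \<Longrightarrow> (a = j \<and> b = i) \<or> (a = i \<and> b = j)"
  by (auto simp: Rq_def split: if_splits)

lemma KQ_nz: "KQ Q a i \<noteq> 0 \<Longrightarrow> a = i \<or> a = - i"
  by (auto simp: KQ_def split: if_splits)

lemma Tgen_tup: "Tgen d Q q m i y x \<noteq> 0 \<Longrightarrow> y \<in> tup d m \<and> x \<in> tup d m"
  by (auto simp: Tgen_def split: if_splits)

lemma Tgen_abs: assumes i: "i < d" and nz: "Tgen d Q q m i y x \<noteq> 0"
  shows "abs ` set y = abs ` set x"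
proof -
  have y: "y \<in> tup d m" and x: "x \<in> tup d m" using Tgen_tup[OF nz] by auto
  have ly: "length y = d" and lx: "length x = d" using x y by (auto simp: tup_def)
  show ?thesis
  proof (cases "i = 0")
    case True
    with nz y x have tl: "tl y = tl x" and k: "KQ Q (hd y) (hd x) \<noteq> 0"
      by (auto simp: Tgen_def split: if_splits)
    have "y \<noteq> []" "x \<noteq> []" using ly lx i by auto
    hence "y = hd y # tl y" "x = hd x # tl x" by auto
    moreover have "\<bar>hd y\<bar> = \<bar>hd x\<bar>" using KQ_nz[OF k] by auto
    ultimately show ?thesis using tl by (metis image_insert list.simps(15))
  next
    case False
    with nz y x have oth: "\<forall>p<d. p \<noteq> i - 1 \<and> p \<noteq> i \<longrightarrow> y ! p = x ! p"
      and r: "Rq q (y ! (i - 1)) (y ! i) (x ! (i - 1)) (x ! i) \<noteq> 0"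
      by (auto simp: Tgen_def split: if_splits)
    have sw: "(y ! (i - 1) = x ! i \<and> y ! i = x ! (i - 1)) \<or> (y ! (i - 1) = x ! (i - 1) \<and> y ! i = x ! i)"
      using Rq_nz[OF r] by auto
    have i1: "i - 1 < d" using i by simp
    have "set y \<subseteq> set x"
    proof
      fix e assume "e \<in> set y"
      then obtain p where p: "p < d" "e = y ! p" using ly by (auto simp: in_set_conv_nth)
      show "e \<in> set x"
      proof (cases "p = i - 1 \<or> p = i")
        case True thus ?thesis using sw p i i1 lx by (auto simp: in_set_conv_nth)
      next
        case False thus ?thesis using oth p lx by (auto simp: in_set_conv_nth)
      qed
    qed
    moreover have "set x \<subseteq> set y"
    proof
      fix e assume "e \<in> set x"
      then obtain p where p: "p < d" "e = x ! p" using lx by (auto simp: in_set_conv_nth)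
      show "e \<in> set y"
      proof (cases "p = i - 1 \<or> p = i")
        case True thus ?thesis using sw p i i1 ly by (auto simp: in_set_conv_nth)
      next
        case False thus ?thesis using oth p ly by (metis in_set_conv_nth)
      qed
    qed
    ultimately show ?thesis by simp
  qed
qed

lemma sig_inj: "finite S \<Longrightarrow> inj_on (sig S) {v. \<bar>v\<bar> \<in> S}"
  by (auto simp: inj_on_def sig_eq_iff)

lemma Tgen_sig:
  assumes S: "finite S" and n: "n = 2 * r + 1" and c: "card S \<le> r" and i: "i < d"
    and y: "y \<in> tup d m" and x: "x \<in> tup d m" and yS: "abs ` set y \<subseteq> S" and xS: "abs ` set x \<subseteq> S"
  shows "Tgen d Q q n i (map (sig S) y) (map (sig S) x) = Tgen d Q q m i y x"
proof -
  have ly: "length y = d" and lx: "length x = d" using x y by (auto simp: tup_def)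
  have ty: "map (sig S) y \<in> tup d n" and tx: "map (sig S) x \<in> tup d n"
    using map_sig_tup[OF S n c ly] map_sig_tup[OF S n c lx] by auto
  have inj: "inj_on (sig S) (set y \<union> set x)"
    using yS xS by (intro inj_on_subset[OF sig_inj[OF S]]) auto
  show ?thesis
  proof (cases "i = 0")
    case True
    have ne: "y \<noteq> []" "x \<noteq> []" using ly lx i by auto
    have hy: "\<bar>hd y\<bar> \<in> S" "\<bar>hd x\<bar> \<in> S" using yS xS ne by auto
    have inj2: "inj_on (sig S) (set (tl y) \<union> set (tl x))"
      using ne by (intro inj_on_subset[OF inj]) (auto dest: list.set_sel(2))
    have "map (sig S) (tl y) = map (sig S) (tl x) \<longleftrightarrow> tl y = tl x"
      using inj_on_map_eq_map[OF inj2] .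
    thus ?thesis using True ty tx y x ne
      by (simp add: Tgen_def map_tl[symmetric] hd_map KQ_sig[OF S hy, of Q])
  next
    case False
    have e: "\<And>p. p < d \<Longrightarrow> \<bar>y ! p\<bar> \<in> S \<and> \<bar>x ! p\<bar> \<in> S" using yS xS ly lx by auto
    have i1: "i - 1 < d" using i by simp
    have eq: "(\<forall>p<d. p \<noteq> i - 1 \<and> p \<noteq> i \<longrightarrow> map (sig S) y ! p = map (sig S) x ! p) \<longleftrightarrow>
              (\<forall>p<d. p \<noteq> i - 1 \<and> p \<noteq> i \<longrightarrow> y ! p = x ! p)"
      using e ly lx by (auto simp: sig_eq_iff[OF S])
    have rq: "Rq q (sig S (y ! (i - 1))) (sig S (y ! i)) (sig S (x ! (i - 1))) (sig S (x ! i)) =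
              Rq q (y ! (i - 1)) (y ! i) (x ! (i - 1)) (x ! i)"
      using e[OF i] e[OF i1] by (intro Rq_sig[OF S]) auto
    show ?thesis using False ty tx y x eq rq i i1 ly lx
      by (simp add: Tgen_def) blast
  qed
qed


lemma mm_app: "mm I A B x z = (\<Sum>y\<in>I. A x y * B y z)"
  by (simp add: mm_def)

lemma relabel_comm:
  fixes T1 :: "'a \<Rightarrow> 'a \<Rightarrow> 'k::field" and T2 :: "'b \<Rightarrow> 'b \<Rightarrow> 'k" and \<phi> :: "'a \<Rightarrow> 'b"
  assumes X1: "finite X1" and X2: "finite X2"
    and A: "A \<subseteq> X1" and phA: "\<phi> ` A \<subseteq> X2" and inj: "inj_on \<phi> A"
    and h1: "\<And>y z. T1 y z \<noteq> 0 \<Longrightarrow> (y \<in> A \<longleftrightarrow> z \<in> A)"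
    and h3: "\<And>w w'. T2 w w' \<noteq> 0 \<Longrightarrow> (w \<in> \<phi> ` A \<longleftrightarrow> w' \<in> \<phi> ` A)"
    and h2: "\<And>y z. y \<in> A \<Longrightarrow> z \<in> A \<Longrightarrow> T2 (\<phi> y) (\<phi> z) = T1 y z"
  shows "mm X1 (\<lambda>x' y. if y \<in> A \<and> x' = \<phi> y then 1 else 0) T1 = mm X2 T2 (\<lambda>x' y. if y \<in> A \<and> x' = \<phi> y then 1 else 0)"
proof (intro ext)
  fix x' z
  have L: "mm X1 (\<lambda>x' y. if y \<in> A \<and> x' = \<phi> y then 1 else 0) T1 x' z = (\<Sum>y\<in>X1. if y \<in> A \<and> x' = \<phi> y then T1 y z else 0)"
    unfolding mm_app by (rule sum.cong) auto
  have "mm X2 T2 (\<lambda>x' y. if y \<in> A \<and> x' = \<phi> y then 1 else 0) x' z = (\<Sum>w\<in>X2. if w = \<phi> z then (if z \<in> A then T2 x' w else 0) else 0)"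
    unfolding mm_app by (rule sum.cong) auto
  also have "\<dots> = (if z \<in> A then T2 x' (\<phi> z) else 0)"
    using X2 phA by (auto simp: sum.delta')
  finally have R: "mm X2 T2 (\<lambda>x' y. if y \<in> A \<and> x' = \<phi> y then 1 else 0) x' z = (if z \<in> A then T2 x' (\<phi> z) else 0)" .
  show "mm X1 (\<lambda>x' y. if y \<in> A \<and> x' = \<phi> y then 1 else 0) T1 x' z = mm X2 T2 (\<lambda>x' y. if y \<in> A \<and> x' = \<phi> y then 1 else 0) x' z"
  proof (cases "x' \<in> \<phi> ` A")
    case True
    then obtain y0 where y0: "y0 \<in> A" "x' = \<phi> y0" by blast
    have "(\<Sum>y\<in>X1. if y \<in> A \<and> x' = \<phi> y then T1 y z else 0) = (\<Sum>y\<in>X1. if y = y0 then T1 y0 z else 0)"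
      using y0 inj by (intro sum.cong) (auto simp: inj_on_def)
    also have "\<dots> = T1 y0 z" using X1 A y0 by (auto simp: sum.delta')
    finally have "mm X1 (\<lambda>x' y. if y \<in> A \<and> x' = \<phi> y then 1 else 0) T1 x' z = T1 y0 z" using L by simp
    moreover have "T1 y0 z = (if z \<in> A then T2 x' (\<phi> z) else 0)"
      using h2[OF y0(1)] h1[of y0 z] y0 by auto
    ultimately show ?thesis using R by simp
  next
    case False
    have "(\<Sum>y\<in>X1. if y \<in> A \<and> x' = \<phi> y then T1 y z else 0) = 0"
      using False by (intro sum.neutral) auto
    moreover have "(if z \<in> A then T2 x' (\<phi> z) else 0) = 0"
      using h3[of x' "\<phi> z"] False by auto
    ultimately show ?thesis using L R by simp
  qed
qed

lemma relabel_comm_T: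
  fixes T1 :: "'a \<Rightarrow> 'a \<Rightarrow> 'k::field" and T2 :: "'b \<Rightarrow> 'b \<Rightarrow> 'k" and \<phi> :: "'a \<Rightarrow> 'b"
  assumes X1: "finite X1" and X2: "finite X2"
    and A: "A \<subseteq> X1" and phA: "\<phi> ` A \<subseteq> X2" and inj: "inj_on \<phi> A"
    and h1: "\<And>y z. T1 y z \<noteq> 0 \<Longrightarrow> (y \<in> A \<longleftrightarrow> z \<in> A)"
    and h3: "\<And>w w'. T2 w w' \<noteq> 0 \<Longrightarrow> (w \<in> \<phi> ` A \<longleftrightarrow> w' \<in> \<phi> ` A)"
    and h2: "\<And>y z. y \<in> A \<Longrightarrow> z \<in> A \<Longrightarrow> T2 (\<phi> y) (\<phi> z) = T1 y z"
  shows "mm X2 (\<lambda>y x'. if y \<in> A \<and> x' = \<phi> y then 1 else 0) T2 = mm X1 T1 (\<lambda>y x'. if y \<in> A \<and> x' = \<phi> y then 1 else 0)"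
proof -
  let ?psi = "inv_into A \<phi>"
  have eqP: "(\<lambda>y x'. if y \<in> A \<and> x' = \<phi> y then 1 else 0) = (\<lambda>y x'. if x' \<in> \<phi> ` A \<and> y = ?psi x' then (1::'k) else 0)"
    using inj by (auto simp: fun_eq_iff inv_into_f_f)
  have img: "?psi ` \<phi> ` A = A" using inj by (simp add: inv_into_image_cancel)
  have "mm X2 (\<lambda>y x'. if x' \<in> \<phi> ` A \<and> y = ?psi x' then (1::'k) else 0) T2 = mm X1 T1 (\<lambda>y x'. if x' \<in> \<phi> ` A \<and> y = ?psi x' then 1 else 0)"
  proof (rule relabel_comm[OF X2 X1 phA])
    show "?psi ` \<phi> ` A \<subseteq> X1" using img A by simp
    show "inj_on ?psi (\<phi> ` A)" by (rule inj_on_inv_into) simp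
    show "\<And>w w'. T2 w w' \<noteq> 0 \<Longrightarrow> (w \<in> \<phi> ` A \<longleftrightarrow> w' \<in> \<phi> ` A)" by (rule h3)
    show "\<And>y z. T1 y z \<noteq> 0 \<Longrightarrow> (y \<in> ?psi ` \<phi> ` A \<longleftrightarrow> z \<in> ?psi ` \<phi> ` A)" using img h1 by simp
    fix w w' assume "w \<in> \<phi> ` A" "w' \<in> \<phi> ` A"
    then obtain y y' where "y \<in> A" "y' \<in> A" "w = \<phi> y" "w' = \<phi> y'" by blast
    thus "T1 (?psi w) (?psi w') = T2 w w'" using inj h2 by (simp add: inv_into_f_f)
  qed
  thus ?thesis using eqP by simp
qed

definition AV :: "nat \<Rightarrow> int set" where "AV m = abs ` idx m"
definition Jc :: "nat \<Rightarrow> nat \<Rightarrow> int set set" where "Jc d m = {S. S \<subseteq> AV m \<and> card S \<le> d}"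
definition Aset :: "nat \<Rightarrow> nat \<Rightarrow> int set \<Rightarrow> int list set" where "Aset d m S = {y \<in> tup d m. abs ` set y = S}"
definition pc :: "nat \<Rightarrow> nat \<Rightarrow> int set \<Rightarrow> 'k::field tmat" where
  "pc d m S = (\<lambda>x' y. if y \<in> Aset d m S \<and> x' = map (sig S) y then 1 else 0)"
definition ic :: "nat \<Rightarrow> nat \<Rightarrow> int set \<Rightarrow> 'k::field tmat" where
  "ic d m S = (\<lambda>y x'. if y \<in> Aset d m S \<and> x' = map (sig S) y then 1 else 0)"

lemma finite_AV: "finite (AV m)" by (simp add: AV_def finite_idx)

lemma finite_Jc: "finite (Jc d m)"
proof -
  have "Jc d m \<subseteq> Pow (AV m)" by (auto simp: Jc_def)
  thus ?thesis using finite_AV by (rule finite_subset[OF _ finite_Pow_iff[THEN iffD2]])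
qed

lemma Jc_facts: assumes "S \<in> Jc d m" shows "finite S" "card S \<le> d" "\<And>s. s \<in> S \<Longrightarrow> 0 \<le> s" "S \<subseteq> AV m"
proof -
  have S: "S \<subseteq> AV m" "card S \<le> d" using assms by (auto simp: Jc_def)
  show "finite S" by (rule finite_subset[OF S(1) finite_AV])
  show "card S \<le> d" by (rule S(2))
  show "S \<subseteq> AV m" by (rule S(1))
  fix s assume "s \<in> S" thus "0 \<le> s" using S(1) by (auto simp: AV_def)
qed

lemma abs_set_map_sig: "abs ` set (map (sig S) y) = sig S ` (abs ` set y)"
  by (auto simp: image_image sig_abs)

lemma sig_nonneg_abs: fixes S :: "int set" assumes "\<And>s. s \<in> S \<Longrightarrow> 0 \<le> s" "s \<in> S" shows "\<bar>s\<bar> \<in> S"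
proof -
  have "\<bar>s\<bar> = s" using assms by simp
  thus ?thesis using assms(2) by simp
qed

lemma AV_idx: assumes "s \<in> AV m" "\<bar>v\<bar> = s" shows "v \<in> idx m"
proof -
  obtain u where u: "u \<in> idx m" "s = \<bar>u\<bar>" using assms(1) by (auto simp: AV_def)
  have "\<bar>u\<bar> \<in> idx m" using u(1) idx_abs[of u m] by simp
  hence "\<bar>v\<bar> \<in> idx m" using u(2) assms(2) by simp
  thus ?thesis using idx_abs[of v m] by simp
qed

lemma image_char:
  assumes S: "S \<in> Jc d m" and n: "n = 2 * r + 1" and dr: "d \<le> r"
  shows "map (sig S) ` Aset d m S = {w \<in> tup d n. abs ` set w = sig S ` S}"
proof -
  note sf = Jc_facts[OF S]
  have c: "card S \<le> r" using sf(2) dr by simp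
  show ?thesis
  proof
    show "map (sig S) ` Aset d m S \<subseteq> {w \<in> tup d n. abs ` set w = sig S ` S}"
    proof
      fix w assume "w \<in> map (sig S) ` Aset d m S"
      then obtain y where y: "y \<in> Aset d m S" "w = map (sig S) y" by blast
      have ly: "length y = d" and ay: "abs ` set y = S" using y(1) by (auto simp: Aset_def tup_def)
      have "w \<in> tup d n" using map_sig_tup[OF sf(1) n c ly] y(2) by simp
      moreover have "abs ` set w = sig S ` S" using y(2) ay abs_set_map_sig[of S y] by simp
      ultimately show "w \<in> {w \<in> tup d n. abs ` set w = sig S ` S}" by simp
    qed
  next
    show "{w \<in> tup d n. abs ` set w = sig S ` S} \<subseteq> map (sig S) ` Aset d m S"
    proof
      fix w assume "w \<in> {w \<in> tup d n. abs ` set w = sig S ` S}"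
      hence w: "w \<in> tup d n" and aw: "abs ` set w = sig S ` S" by auto
      define ch where "ch e = (SOME s. s \<in> S \<and> sig S s = \<bar>e\<bar>)" for e
      define g where "g e = sgn e * ch e" for e
      have chs: "ch e \<in> S \<and> sig S (ch e) = \<bar>e\<bar>" if e: "e \<in> set w" for e
      proof -
        have "\<bar>e\<bar> \<in> sig S ` S" using aw e by blast
        then obtain s where "s \<in> S" "sig S s = \<bar>e\<bar>" by auto
        hence "\<exists>s. s \<in> S \<and> sig S s = \<bar>e\<bar>" by blast
        thus ?thesis unfolding ch_def by (rule someI_ex)
      qed
      have ge: "sig S (g e) = e \<and> \<bar>g e\<bar> \<in> S" if e: "e \<in> set w" for e
      proof -
        have cs: "ch e \<in> S" "sig S (ch e) = \<bar>e\<bar>" using chs[OF e] by auto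
        have c0: "0 \<le> ch e" using sf(3)[OF cs(1)] .
        show ?thesis
        proof (cases "e = 0")
          case True
          hence "sig S (ch e) = 0" using cs by simp
          hence "ch e = 0" using sig_sign(2)[OF sf(1) sig_nonneg_abs[OF sf(3) cs(1)]] by simp
          thus ?thesis using True cs by (simp add: g_def)
        next
          case False
          show ?thesis
          proof (cases "0 < e")
            case True thus ?thesis using cs c0 by (simp add: g_def)
          next
            case False
            hence "e < 0" using \<open>e \<noteq> 0\<close> by simp
            thus ?thesis using cs c0 by (simp add: g_def sig_neg)
          qed
        qed
      qed
      define y where "y = map g w"
      have my: "map (sig S) y = w" unfolding y_def map_map by (rule map_idI) (simp add: ge)
      have yS: "abs ` set y \<subseteq> S" using ge by (auto simp: y_def)
      have ty: "y \<in> tup d m"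
      proof -
        have "\<And>v. v \<in> set y \<Longrightarrow> v \<in> idx m"
          using yS sf(4) AV_idx by blast
        thus ?thesis using w by (auto simp: tup_def y_def)
      qed
      have "sig S ` (abs ` set y) = sig S ` S" using aw my abs_set_map_sig[of S y] by simp
      moreover have "inj_on (sig S) S" using sig_inj[OF sf(1)] by (rule inj_on_subset) (auto intro: sig_nonneg_abs[OF sf(3)])
      ultimately have "abs ` set y = S" using yS by (simp add: inj_on_image_eq_iff)
      hence "y \<in> Aset d m S" using ty by (simp add: Aset_def)
      thus "w \<in> map (sig S) ` Aset d m S" using my by blast
    qed
  qed
qed

lemma inj_map_sig: assumes S: "finite S" shows "inj_on (map (sig S)) {y. abs ` set y \<subseteq> S}"
proof (rule inj_onI)
  fix y z assume y: "y \<in> {y. abs ` set y \<subseteq> S}" and z: "z \<in> {y. abs ` set y \<subseteq> S}"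
    and e: "map (sig S) y = map (sig S) z"
  have "inj_on (sig S) (set y \<union> set z)"
    using y z by (intro inj_on_subset[OF sig_inj[OF S]]) auto
  thus "y = z" using e inj_on_map_eq_map by blast
qed

lemma pc_ic_CHom:
  assumes S: "S \<in> Jc d m" and n: "n = 2 * r + 1" and dr: "d \<le> r"
  shows "pc d m S \<in> CHom d Q q m n" "ic d m S \<in> CHom d Q q n m"
proof -
  note sf = Jc_facts[OF S]
  have c: "card S \<le> r" using sf(2) dr by simp
  let ?A = "Aset d m S" and ?phi = "map (sig S)"
  have A: "?A \<subseteq> tup d m" by (auto simp: Aset_def)
  have ic_char: "?phi ` ?A = {w \<in> tup d n. abs ` set w = sig S ` S}" by (rule image_char[OF S n dr])
  have phA: "?phi ` ?A \<subseteq> tup d n" using ic_char by auto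
  have inj: "inj_on ?phi ?A"
    by (rule inj_on_subset[OF inj_map_sig[OF sf(1)]]) (auto simp: Aset_def)
  have pcd: "pc d m S = (\<lambda>x' y. if y \<in> ?A \<and> x' = ?phi y then 1 else 0)" by (simp add: pc_def fun_eq_iff)
  have icd: "ic d m S = (\<lambda>y x'. if y \<in> ?A \<and> x' = ?phi y then 1 else 0)" by (simp add: ic_def fun_eq_iff)
  have h1: "Tgen d Q q m i y z \<noteq> 0 \<Longrightarrow> (y \<in> ?A \<longleftrightarrow> z \<in> ?A)" if i: "i < d" for i y z
    using Tgen_tup[of d Q q m i y z] Tgen_abs[OF i, of Q q m y z] by (auto simp: Aset_def)
  have h3: "Tgen d Q q n i w w' \<noteq> 0 \<Longrightarrow> (w \<in> ?phi ` ?A \<longleftrightarrow> w' \<in> ?phi ` ?A)" if i: "i < d" for i w w'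
    unfolding ic_char using Tgen_tup[of d Q q n i w w'] Tgen_abs[OF i, of Q q n w w'] by auto
  have h2: "y \<in> ?A \<Longrightarrow> z \<in> ?A \<Longrightarrow> Tgen d Q q n i (?phi y) (?phi z) = Tgen d Q q m i y z" if i: "i < d" for i y z
    by (rule Tgen_sig[OF sf(1) n c i]) (auto simp: Aset_def)
  show "pc d m S \<in> CHom d Q q m n"
    unfolding CHom_iff
  proof (intro conjI allI impI)
    show "supp_in (tup d n) (tup d m) (pc d m S)"
      using A phA by (auto simp: pcd supp_in_def split: if_splits)
    fix i assume i: "i < d"
    show "mm (tup d m) (pc d m S) (Tgen d Q q m i) = mm (tup d n) (Tgen d Q q n i) (pc d m S)"
      unfolding pcd by (rule relabel_comm[where ?T1.0="Tgen d Q q m i" and ?T2.0="Tgen d Q q n i", OF finite_tup[of d m] finite_tup[of d n] A phA inj h1[OF i] h3[OF i] h2[OF i]])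
  qed
  show "ic d m S \<in> CHom d Q q n m"
    unfolding CHom_iff
  proof (intro conjI allI impI)
    show "supp_in (tup d m) (tup d n) (ic d m S)"
      using A phA by (auto simp: icd supp_in_def split: if_splits)
    fix i assume i: "i < d"
    show "mm (tup d n) (ic d m S) (Tgen d Q q n i) = mm (tup d m) (Tgen d Q q m i) (ic d m S)"
      unfolding icd by (rule relabel_comm_T[where ?T1.0="Tgen d Q q m i" and ?T2.0="Tgen d Q q n i", OF finite_tup[of d m] finite_tup[of d n] A phA inj h1[OF i] h3[OF i] h2[OF i]])
  qed
qed

lemma splt_conc:
  assumes n: "n = 2 * r + 1" and dr: "d \<le> r"
  shows "(\<lambda>x y. \<Sum>S\<in>Jc d m. mm (tup d n) (ic d m S) (pc d m S) x y) = tid d m"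
proof (intro ext)
  fix y z
  have inner: "mm (tup d n) (ic d m S) (pc d m S) y z = (if y \<in> Aset d m S \<and> z = y then 1 else 0)"
    if S: "S \<in> Jc d m" for S
  proof -
    note sf = Jc_facts[OF S]
    have c: "card S \<le> r" using sf(2) dr by simp
    have "mm (tup d n) (ic d m S) (pc d m S) y z =
      (\<Sum>x'\<in>tup d n. if x' = map (sig S) y then (if y \<in> Aset d m S \<and> z \<in> Aset d m S \<and> map (sig S) z = map (sig S) y then 1 else 0) else 0)"
      unfolding mm_app ic_def pc_def by (rule sum.cong) auto
    also have "\<dots> = (if y \<in> Aset d m S \<and> z \<in> Aset d m S \<and> map (sig S) z = map (sig S) y then 1 else 0)"
    proof (cases "y \<in> Aset d m S")
      case True
      hence "map (sig S) y \<in> tup d n" using map_sig_tup[OF sf(1) n c] by (auto simp: Aset_def tup_def)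
      thus ?thesis by (simp add: sum.delta' finite_tup)
    next
      case False thus ?thesis by simp
    qed
    also have "\<dots> = (if y \<in> Aset d m S \<and> z = y then 1 else 0)"
    proof -
      have "y \<in> Aset d m S \<Longrightarrow> z \<in> Aset d m S \<Longrightarrow> map (sig S) z = map (sig S) y \<Longrightarrow> z = y"
        using inj_map_sig[OF sf(1)] by (auto simp: Aset_def inj_on_def)
      thus ?thesis by auto
    qed
    finally show ?thesis .
  qed
  have "(\<Sum>S\<in>Jc d m. mm (tup d n) (ic d m S) (pc d m S) y z) = (\<Sum>S\<in>Jc d m. if abs ` set y = S then (if y \<in> tup d m \<and> z = y then 1 else 0) else 0)"
    by (rule sum.cong) (auto simp: inner Aset_def)
  also have "\<dots> = (if y \<in> tup d m \<and> z = y then 1 else 0)"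
  proof (cases "y \<in> tup d m")
    case True
    have "abs ` set y \<in> Jc d m"
    proof -
      have "abs ` set y \<subseteq> AV m" using True by (auto simp: tup_def AV_def)
      moreover have "card (abs ` set y) \<le> d"
        using True card_image_le[of "set y" abs] card_length[of y] by (auto simp: tup_def)
      ultimately show ?thesis by (simp add: Jc_def)
    qed
    thus ?thesis by (simp add: sum.delta finite_Jc)
  next
    case False thus ?thesis by simp
  qed
  also have "\<dots> = tid d m y z" by (auto simp: tid_def)
  finally show "(\<Sum>S\<in>Jc d m. mm (tup d n) (ic d m S) (pc d m S) y z) = tid d m y z" .
qed


theorem theorem3p10:
  fixes Q q :: "'k::field" and d r n :: nat
  assumes "Q \<noteq> 0" and "q \<noteq> 0" and "1 \<le> d" and "n = 2 * r + 1" and "d \<le> r"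
  shows "cat_equivalent (Pcat d Q q) (Smod_cat d Q q n)"
proof -
  interpret M: morita d Q q n "Jc d" "pc d" "ic d"
  proof
    show "1 \<le> n" using assms(4) by simp
    show "finite (Jc d m)" for m by (rule finite_Jc)
    show "pc d m j \<in> CHom d Q q m n" if "1 \<le> m" "j \<in> Jc d m" for m j
      by (rule pc_ic_CHom(1)[OF that(2) assms(4,5)])
    show "ic d m j \<in> CHom d Q q n m" if "1 \<le> m" "j \<in> Jc d m" for m j
      by (rule pc_ic_CHom(2)[OF that(2) assms(4,5)])
    show "(\<lambda>x y. \<Sum>j\<in>Jc d m. mm (tup d n) (ic d m j) (pc d m j) x y) = tid d m" if "1 \<le> m" for m
      by (rule splt_conc[OF assms(4,5)])
  qed
  show ?thesis by (rule M.morita_equiv)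
qed

end
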